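(* For every function $m\in W^{1,2}(0,1)$ and every $\nu>0$, $$\int_0^1 e^{2m}\,dx\le \frac{1+\nu}{4}\Big(\int_0^1 e^m\,dx\Big)^2\int_0^1|m_x|^2\,dx+\Big(1+\frac1\nu\Big)\Big(\int_0^1 e^m\,dx\Big)^2.$$ *)

theory Defs
  imports "HOL-Analysis.Analysis"
begin

definition smooth_fun :: "(real \<Rightarrow> real) \<Rightarrow> bool" where
  "smooth_fun \<phi> \<longleftrightarrow> (\<forall>k x. ((deriv ^^ k) \<phi>) differentiable (at x))"

definition test_fun01 :: "(real \<Rightarrow> real) \<Rightarrow> bool" where
  "test_fun01 \<phi> \<longleftrightarrow> smooth_fun \<phi> \<and>
     (\<exists>a b. 0 < a \<and> b < 1 \<and> (\<forall>x. x \<notin> {a..b} \<longrightarrow> \<phi> x = 0))"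

definition L2_01 :: "(real \<Rightarrow> real) \<Rightarrow> bool" where
  "L2_01 f \<longleftrightarrow> set_borel_measurable lborel {0<..<1} f \<and>
     set_integrable lborel {0<..<1} (\<lambda>x. (f x)\<^sup>2)"

definition W12_01 :: "(real \<Rightarrow> real) \<Rightarrow> (real \<Rightarrow> real) \<Rightarrow> bool" where
  "W12_01 m g \<longleftrightarrow> L2_01 m \<and> L2_01 g \<and>
     (\<forall>\<phi>. test_fun01 \<phi> \<longrightarrow>
        (LINT x:{0<..<1}|lborel. m x * deriv \<phi> x) = - (LINT x:{0<..<1}|lborel. g x * \<phi> x))"

end

theory Submission
  imports Defs "HOL-Computational_Algebra.Polynomial"
begin

lemma smooth_by_seq:
  fixes D :: "nat \<Rightarrow> real \<Rightarrow> real"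
  assumes "D 0 = f" "\<And>k x. (D k has_real_derivative D (Suc k) x) (at x)"
  shows "smooth_fun f" "deriv f = D 1"
proof -
  have *: "(deriv ^^ k) f = D k" for k
  proof (induction k)
    case 0 then show ?case using assms(1) by simp
  next
    case (Suc k)
    have "deriv (D k) = D (Suc k)"
      using assms(2) DERIV_imp_deriv by blast
    then show ?case using Suc by simp
  qed
  show "smooth_fun f" unfolding smooth_fun_def
    using * assms(2) real_differentiable_def by metis
  show "deriv f = D 1" using *[of 1] by simp
qed

definition QQ :: "real poly" where "QQ = [:0,1,-1:]"

lemma poly_QQ: "poly QQ x = x * (1 - x)" by (simp add: QQ_def algebra_simps)

fun pp :: "nat \<Rightarrow> real poly" where
  "pp 0 = 1"
| "pp (Suc k) = pderiv (pp k) * QQ^2 - smult (2 * of_nat k) (pp k * pderiv QQ * QQ) + pp k * pderiv QQ"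

definition FF :: "nat \<Rightarrow> real \<Rightarrow> real" where
  "FF k y = poly (pp k) y / (y*(1-y))^(2*k) * exp (-1/(y*(1-y)))"

lemma pow_pred_aux: "(z::real) \<noteq> 0 \<Longrightarrow> of_nat (2*k) * z^(2*k-1) = of_nat (2*k) * z^(2*k) / z"
  by (cases k) (auto simp: field_simps)

lemma alg: "(z::real) \<noteq> 0 \<Longrightarrow> Z \<noteq> 0 \<Longrightarrow> (a*Z - p*(kk*Z/z*d))/Z^2 * E + (E*(d/z^2)) * (p/Z)
       = (a*z^2 - kk*(p*d*z) + p*d)/(z^2 * Z) * E"
  by (simp add: field_simps power2_eq_square)

lemma FF_deriv:
  assumes "0 < x" "x < 1"
  shows "(FF k has_real_derivative FF (Suc k) x) (at x)"
proof -
  have q: "x*(1-x) \<noteq> 0" using assms by simp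
  have pQ: "poly (pderiv QQ) x = 1 - 2*x"
    by (simp add: QQ_def pderiv_pCons)
  have e: "((\<lambda>y. exp (-1/(y*(1-y)))) has_real_derivative exp(-1/(x*(1-x))) * ((1-2*x)/(x*(1-x))^2)) (at x)"
    using q apply (auto intro!: derivative_eq_intros simp: field_simps power2_eq_square)
    by (metis minus_diff_eq minus_divide_left)
  have d: "((\<lambda>y. poly (pp k) y / (y*(1-y))^(2*k)) has_real_derivative
     (poly (pderiv (pp k)) x * (x*(1-x))^(2*k) - poly (pp k) x * (of_nat (2*k) * (x*(1-x))^(2*k) / (x*(1-x)) * (1 - 2*x)))
       / ((x*(1-x))^(2*k))^2) (at x)"
  proof -
    have aux: "2 * real k * ((1 - 2 * x) * (x * (1 - x)) ^ (2 * k - Suc 0)) = 2 * real k * (x * (1 - x)) ^ (2 * k) * (1 - 2 * x) / (x * (1 - x))"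
      using q by (cases k) (simp_all add: field_simps)
    show ?thesis
    using q apply (auto intro!: derivative_eq_intros simp: power2_eq_square)
      by (simp add: aux)
  qed
  have pw: "(x*(1-x))^(2*Suc k) = (x*(1-x))^2 * (x*(1-x))^(2*k)" by (simp add: power_add[symmetric])
  show ?thesis
    unfolding FF_def[abs_def]
    apply (rule DERIV_cong[OF DERIV_mult[OF d e]])
    unfolding pw  apply (subst alg) using q apply simp_all by (simp add: pQ poly_QQ)
qed

lemma exp_neg_inv_bound:
  assumes "z > 0" "N > 0"
  shows "exp (-1/z) \<le> (real N * z) ^ N"
proof -
  have "(1 + (1/z) / real N) ^ N \<le> exp (1/z)"
  proof (rule exp_ge_one_plus_x_over_n_power_n)
    have "1/z > 0" using assms by simp
    thus "1/z \<ge> - real N" by linarith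
  qed (use assms in auto)
  moreover have "((1/z) / real N) ^ N \<le> (1 + (1/z) / real N) ^ N"
    by (rule power_mono) (use assms in auto)
  ultimately have "((1/z) / real N) ^ N \<le> exp (1/z)" by linarith
  hence "1 / exp (1/z) \<le> 1 / ((1/z) / real N) ^ N"
    by (rule divide_left_mono) (use assms in auto)
  also have "1 / ((1/z) / real N) ^ N = (real N * z) ^ N"
    using assms by (simp add: field_simps power_divide)
  finally show ?thesis by (simp add: exp_minus field_simps)
qed

lemma FF_bound: "\<exists>C\<ge>0. \<forall>x. 0 < x \<and> x < 1 \<longrightarrow> \<bar>FF k x\<bar> \<le> C * (x*(1-x))"
proof -
  have "compact (poly (pp k) ` {0..1})"
    by (intro compact_continuous_image) (auto intro: continuous_intros)
  then obtain B where B: "\<And>y. y \<in> poly (pp k) ` {0..1} \<Longrightarrow> norm y \<le> B"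
    using compact_imp_bounded bounded_iff by metis
  define N where "N = 2*k+1"
  have Bn: "B \<ge> 0" using B[of "poly (pp k) 0"] by auto
  show ?thesis
  proof (intro exI[of _ "B * real N ^ N"] conjI allI impI)
    show "0 \<le> B * real N ^ N" using Bn by simp
    fix x :: real assume x: "0 < x \<and> x < 1"
    define z where "z = x*(1-x)"
    have z: "z > 0" using x by (simp add: z_def)
    have pb: "\<bar>poly (pp k) x\<bar> \<le> B" using B[of "poly (pp k) x"] x by auto
    have eb: "exp (-1/z) \<le> (real N * z) ^ N" using exp_neg_inv_bound[OF z, of N] by (simp add: N_def)
    have "\<bar>FF k x\<bar> = \<bar>poly (pp k) x\<bar> / z^(2*k) * exp (-1/z)"
      using z by (simp add: FF_def z_def abs_mult)
    also have "\<dots> \<le> B / z^(2*k) * (real N * z) ^ N"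
      by (intro mult_mono divide_right_mono pb eb) (use z Bn in auto)
    also have "(real N * z) ^ N = real N ^ N * z^(2*k) * z"
      by (simp add: N_def power_mult_distrib power_add)
    also have "B / z^(2*k) * (real N ^ N * z^(2*k) * z) = B * real N ^ N * z"
      using z by (simp add: field_simps)
    finally show "\<bar>FF k x\<bar> \<le> B * real N ^ N * (x*(1-x))" by (simp add: z_def)
  qed
qed

lemma deriv_zero_pt:
  fixes f f' :: "real \<Rightarrow> real"
  assumes f0: "f c = 0" and r: "r > 0"
    and der: "\<And>x. x \<noteq> c \<Longrightarrow> \<bar>x - c\<bar> < r \<Longrightarrow> (f has_real_derivative f' x) (at x)"
    and lf: "(f \<longlongrightarrow> 0) (at c)" and lf': "(f' \<longlongrightarrow> 0) (at c)"
  shows "(f has_real_derivative 0) (at c)"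
proof -
  have contc: "isCont f c" using lf f0 by (simp add: isCont_def)
  have "((\<lambda>h. (f (c + h) - f c) / h) \<longlongrightarrow> 0) (at 0)"
    unfolding LIM_eq
  proof (intro allI impI)
    fix e :: real assume e: "e > 0"
    obtain s where s: "s > 0" "\<And>x. x \<noteq> c \<Longrightarrow> norm (x - c) < s \<Longrightarrow> norm (f' x - 0) < e"
      using lf'[unfolded LIM_eq] e by blast
    show "\<exists>s>0. \<forall>h. h \<noteq> 0 \<and> norm (h - 0) < s \<longrightarrow> norm ((f (c + h) - f c) / h - 0) < e"
    proof (intro exI[of _ "min s r"] conjI allI impI)
      show "min s r > 0" using s r by simp
      fix h :: real assume h: "h \<noteq> 0 \<and> norm (h - 0) < min s r"
      define a b where "a = min c (c+h)" and "b = max c (c+h)"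
      have ab: "a < b" using h by (auto simp: a_def b_def)
      have cont: "continuous_on {a..b} f"
      proof (intro continuous_at_imp_continuous_on ballI)
        fix x assume x: "x \<in> {a..b}"
        show "isCont f x"
        proof (cases "x = c")
          case True then show ?thesis using contc by simp
        next
          case False
          have "\<bar>x - c\<bar> < r" using x h by (auto simp: a_def b_def)
          then show ?thesis using der[OF False] DERIV_isCont by blast
        qed
      qed
      have dif: "f differentiable (at x)" if "a < x" "x < b" for x
      proof -
        have "x \<noteq> c" "\<bar>x - c\<bar> < r" using that h by (auto simp: a_def b_def)
        then show ?thesis using der real_differentiable_def by blast
      qed
      obtain l z where z: "a < z" "z < b" "DERIV f z :> l" "f b - f a = (b - a) * l"
        using MVT[OF ab cont dif] by blast
      have zc: "z \<noteq> c" "\<bar>z - c\<bar> < min s r" using z(1,2) h by (auto simp: a_def b_def)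
      have "l = f' z" using DERIV_unique[OF z(3) der[OF zc(1)]] zc by simp
      hence lb: "\<bar>l\<bar> < e" using s(2)[OF zc(1)] zc by simp
      have "f (c+h) - f c = h * l"
        using z(4) by (cases "h > 0") (auto simp: a_def b_def algebra_simps)
      hence "\<bar>f (c+h) - f c\<bar> = \<bar>h\<bar> * \<bar>l\<bar>" by (simp add: abs_mult)
      hence "\<bar>(f (c + h) - f c) / h\<bar> = \<bar>l\<bar>" using h by (simp add: abs_divide)
      thus "norm ((f (c + h) - f c) / h - 0) < e" using lb by simp
    qed
  qed
  thus ?thesis by (simp add: DERIV_def)
qed

definition BD :: "nat \<Rightarrow> real \<Rightarrow> real" where
  "BD k x = (if 0 < x \<and> x < 1 then FF k x else 0)"

lemma BD_bound: "\<exists>C\<ge>0. \<forall>x. \<bar>BD k x\<bar> \<le> C * \<bar>x\<bar> \<and> \<bar>BD k x\<bar> \<le> C * \<bar>x - 1\<bar>"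
proof -
  obtain C where C: "C \<ge> 0" "\<And>x. 0 < x \<and> x < 1 \<Longrightarrow> \<bar>FF k x\<bar> \<le> C * (x*(1-x))"
    using FF_bound by blast
  have "\<bar>BD k x\<bar> \<le> C * \<bar>x\<bar> \<and> \<bar>BD k x\<bar> \<le> C * \<bar>x - 1\<bar>" for x
  proof (cases "0 < x \<and> x < 1")
    case True
    have a: "x*(1-x) \<le> \<bar>x\<bar>" "x*(1-x) \<le> \<bar>x - 1\<bar>" using True
      by (auto simp: abs_if mult_le_cancel_left1 mult_le_cancel_right1)
    have "C * (x*(1-x)) \<le> C * \<bar>x\<bar>" "C * (x*(1-x)) \<le> C * \<bar>x - 1\<bar>"
      using a C(1) by (auto intro: mult_left_mono)
    then show ?thesis using C(2)[OF True] True by (simp add: BD_def)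
  next
    case False
    then have "BD k x = 0" by (auto simp: BD_def)
    then show ?thesis using C(1) by simp
  qed
  then show ?thesis using C(1) by blast
qed

lemma BD_lim0: "(BD k \<longlongrightarrow> 0) (at c)" if "c = 0 \<or> c = 1"
proof -
  obtain C where C: "C \<ge> 0" "\<And>x. \<bar>BD k x\<bar> \<le> C * \<bar>x\<bar> \<and> \<bar>BD k x\<bar> \<le> C * \<bar>x - 1\<bar>"
    using BD_bound by blast
  have ev: "\<forall>\<^sub>F x in at c. norm (BD k x) \<le> C * \<bar>x - c\<bar>"
    using C that by (intro always_eventually) auto
  have "((\<lambda>x. C * \<bar>x - c\<bar>) \<longlongrightarrow> C * \<bar>c - c\<bar>) (at c)"
    by (intro tendsto_intros)
  hence t: "((\<lambda>x. C * \<bar>x - c\<bar>) \<longlongrightarrow> 0) (at c)" by simp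
  show ?thesis by (rule Lim_null_comparison[OF ev t])
qed

lemma BD_deriv: "(BD k has_real_derivative BD (Suc k) x) (at x)"
proof -
  have inner: "(BD k has_real_derivative BD (Suc k) x) (at x)" if "x \<noteq> 0" "x \<noteq> 1" for k x
  proof (cases "0 < x \<and> x < 1")
    case True
    have "BD (Suc k) x = FF (Suc k) x" using True by (simp add: BD_def)
    moreover have "(BD k has_real_derivative FF (Suc k) x) (at x)"
      by (rule has_field_derivative_transform_within_open[OF FF_deriv[of x k], where S="{0<..<1}"])
         (use True in \<open>auto simp: BD_def\<close>)
    ultimately show ?thesis by simp
  next
    case False
    hence "x < 0 \<or> x > 1" using that by auto
    hence "x \<in> {..<0} \<union> {1<..}" by auto
    moreover have "BD (Suc k) x = 0" using False by (auto simp: BD_def)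
    moreover have "(BD k has_real_derivative 0) (at x)"
      by (rule has_field_derivative_transform_within_open[OF DERIV_const[of 0 "at x"], where S="{..<0} \<union> {1<..}"])
         (use calculation in \<open>auto simp: BD_def\<close>)
    ultimately show ?thesis by simp
  qed
  show ?thesis
  proof (cases "x = 0 \<or> x = 1")
    case True
    have "(BD k has_real_derivative 0) (at x)"
    proof (rule deriv_zero_pt[where r="1/2" and f'="BD (Suc k)"])
      show "BD k x = 0" using True by (auto simp: BD_def)
      show "\<And>y. y \<noteq> x \<Longrightarrow> \<bar>y - x\<bar> < 1/2 \<Longrightarrow> (BD k has_real_derivative BD (Suc k) y) (at y)"
        using True by (intro inner) auto
      show "(BD k \<longlongrightarrow> 0) (at x)" using True by (intro BD_lim0) 
      show "(BD (Suc k) \<longlongrightarrow> 0) (at x)" using True by (intro BD_lim0) 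
    qed simp
    moreover have "BD (Suc k) x = 0" using True by (auto simp: BD_def)
    ultimately show ?thesis by simp
  next
    case False then show ?thesis by (intro inner) auto
  qed
qed

definition smth :: "(real \<Rightarrow> real) \<Rightarrow> bool" where
  "smth f \<longleftrightarrow> (\<exists>D. D 0 = f \<and> (\<forall>k x. (D k has_real_derivative D (Suc k) x) (at x)))"

lemma smth_smooth: "smth f \<Longrightarrow> smooth_fun f"
  unfolding smth_def using smooth_by_seq by blast

lemma smth_bump: "smth (BD 0)"
  unfolding smth_def using BD_deriv by blast

lemma smth_cmult: assumes "smth f" shows "smth (\<lambda>x. c * f x)"
proof -
  obtain D where D: "D 0 = f" "\<And>k x. (D k has_real_derivative D (Suc k) x) (at x)"
    using assms unfolding smth_def by blast
  show ?thesis unfolding smth_def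
    by (intro exI[of _ "\<lambda>k x. c * D k x"]) (auto simp: D(1) intro!: DERIV_cmult D(2))
qed

lemma smth_diff: assumes "smth f" "smth g" shows "smth (\<lambda>x. f x - g x)"
proof -
  obtain D where D: "D 0 = f" "\<And>k x. (D k has_real_derivative D (Suc k) x) (at x)"
    using assms unfolding smth_def by blast
  obtain E where E: "E 0 = g" "\<And>k x. (E k has_real_derivative E (Suc k) x) (at x)"
    using assms unfolding smth_def by blast
  show ?thesis unfolding smth_def
    by (intro exI[of _ "\<lambda>k x. D k x - E k x"]) (auto simp: D(1) E(1) intro!: DERIV_diff D(2) E(2))
qed

lemma smth_affine: assumes "smth f" shows "smth (\<lambda>x. f (\<alpha> * x + \<beta>))"
proof -
  obtain D where D: "D 0 = f" "\<And>k x. (D k has_real_derivative D (Suc k) x) (at x)"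
    using assms unfolding smth_def by blast
  have "((\<lambda>x. \<alpha>^k * D k (\<alpha> * x + \<beta>)) has_real_derivative \<alpha>^(Suc k) * D (Suc k) (\<alpha> * x + \<beta>)) (at x)" for k x
  proof -
    have lin: "((\<lambda>x. \<alpha> * x + \<beta>) has_real_derivative \<alpha>) (at x)"
      using DERIV_add[OF DERIV_cmult[OF DERIV_ident, of \<alpha>] DERIV_const[of \<beta>]] by simp
    have "((\<lambda>x. D k (\<alpha> * x + \<beta>)) has_real_derivative D (Suc k) (\<alpha> * x + \<beta>) * \<alpha>) (at x)"
      by (rule DERIV_chain2[OF D(2) lin])
    from DERIV_cmult[OF this, of "\<alpha>^k"] show ?thesis by (simp add: algebra_simps)
  qed
  then show ?thesis unfolding smth_def
    by (intro exI[of _ "\<lambda>k x. \<alpha>^k * D k (\<alpha> * x + \<beta>)"]) (auto simp: D(1))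
qed

lemma smth_derivE:
  assumes "smth f"
  obtains f' where "\<And>x. (f has_real_derivative f' x) (at x)" "smth f'"
proof -
  obtain D where D: "D 0 = f" "\<And>k x. (D k has_real_derivative D (Suc k) x) (at x)"
    using assms unfolding smth_def by blast
  have "smth (D 1)" unfolding smth_def
    by (intro exI[of _ "\<lambda>k. D (Suc k)"]) (auto intro: D(2))
  then show ?thesis using that D by (metis One_nat_def)
qed

lemma smth_isCont: assumes "smth f" shows "isCont f x"
proof -
  obtain D where D: "D 0 = f" "\<And>k x. (D k has_real_derivative D (Suc k) x) (at x)"
    using assms unfolding smth_def by blast
  show ?thesis using DERIV_isCont[OF D(2)[of 0 x]] D(1) by simp
qed

lemma smth_cont: "smth f \<Longrightarrow> continuous_on S f"
  by (intro continuous_at_imp_continuous_on ballI smth_isCont)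

lemma antideriv_has_deriv:
  fixes A x :: real
  assumes "\<And>x. isCont f x"
  shows "((\<lambda>x. LBINT t=A..x. f t) has_real_derivative f x) (at x)"
proof -
  define a b :: real where "a = min A x - 1" and "b = max A x + 1"
  have "((\<lambda>u. LBINT y=A..u. f y) has_vector_derivative (f x)) (at x within {a..b})"
  proof (rule interval_integral_FTC2)
    show "continuous_on {a..b} f" by (intro continuous_at_imp_continuous_on ballI assms)
  qed (auto simp: a_def b_def)
  moreover have "x \<in> interior {a..b}" by (auto simp: a_def b_def)
  ultimately have "((\<lambda>u. LBINT y=A..u. f y) has_vector_derivative (f x)) (at x)"
    using at_within_interior[of x "{a..b}"] by metis
  then show ?thesis unfolding has_real_derivative_iff_has_vector_derivative .
qed

lemma smth_antideriv:
  fixes A :: real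
  assumes "smth f"
  shows "smth (\<lambda>x. LBINT t=A..x. f t)"
proof -
  obtain D where D: "D 0 = f" "\<And>k x. (D k has_real_derivative D (Suc k) x) (at x)"
    using assms unfolding smth_def by blast
  define E where "E k = (case k of 0 \<Rightarrow> (\<lambda>x. LBINT t=A..x. f t) | Suc j \<Rightarrow> D j)" for k
  have "(E k has_real_derivative E (Suc k) x) (at x)" for k x
  proof (cases k)
    case 0
    have "E k = (\<lambda>x. LBINT t=A..x. f t)" "E (Suc k) = f" using 0 D(1) by (simp_all add: E_def)
    then show ?thesis using antideriv_has_deriv[of f A x, OF smth_isCont[OF assms]] by simp
  next
    case (Suc j)
    then show ?thesis using D(2) by (simp add: E_def)
  qed
  then show ?thesis unfolding smth_def by (intro exI[of _ E]) (simp add: E_def)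
qed

lemma BD0_eq: "BD 0 t = (if 0 < t \<and> t < 1 then exp (-1/(t*(1-t))) else 0)"
  by (simp add: BD_def FF_def)

lemma BD0_nonneg: "BD 0 t \<ge> 0" by (simp add: BD0_eq)
lemma BD0_pos: "0 < t \<Longrightarrow> t < 1 \<Longrightarrow> BD 0 t > 0" by (simp add: BD0_eq)
lemma BD0_zero: "t \<le> 0 \<or> t \<ge> 1 \<Longrightarrow> BD 0 t = 0" by (auto simp: BD0_eq)

lemma smth_isCont': "smth f \<Longrightarrow> isCont f x" by (rule smth_isCont)

lemma lbint_zero:
  fixes a b :: real
  assumes "\<And>x. min a b < x \<Longrightarrow> x < max a b \<Longrightarrow> f x = 0"
  shows "(LBINT t=a..b. f t) = 0"
proof -
  have "(LBINT t=a..b. f t) = (LBINT t=a..b. 0)"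
    by (rule interval_integral_cong) (use assms in \<open>auto simp: einterval_iff min_def max_def split: if_splits\<close>)
  also have "\<dots> = 0" by simp
  finally show ?thesis .
qed

lemma lbint_split:
  fixes a b c :: real
  assumes "\<And>x. isCont f x"
  shows "(LBINT t=a..b. f t) + (LBINT t=b..c. f t) = (LBINT t=a..c. f t)"
proof (rule interval_integral_sum)
  have "interval_lebesgue_integrable lborel (min a (min b c)) (max a (max b c)) f"
    by (intro interval_integrable_isCont assms)
  moreover have "ereal (min a (min b c)) = min (ereal a) (min (ereal b) (ereal c))"
     "ereal (max a (max b c)) = max (ereal a) (max (ereal b) (ereal c))"
    by (auto simp: min_def max_def)
  ultimately show "interval_lebesgue_integrable lborel (min (ereal a) (min (ereal b) (ereal c))) (max (ereal a) (max (ereal b) (ereal c))) f"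
    by simp
qed

definition S0 :: "real \<Rightarrow> real" where "S0 x = (LBINT t=(0::real)..x. BD 0 t)"
definition I0 :: real where "I0 = S0 1"

lemma S0_deriv: "(S0 has_real_derivative BD 0 x) (at x)"
  unfolding S0_def[abs_def] by (rule antideriv_has_deriv) (rule smth_isCont[OF smth_bump])

lemma S0_left: "x \<le> 0 \<Longrightarrow> S0 x = 0"
  unfolding S0_def by (rule lbint_zero) (auto intro: BD0_zero)

lemma S0_right: "x \<ge> 1 \<Longrightarrow> S0 x = I0"
proof -
  assume x: "x \<ge> 1"
  have "S0 x = S0 1 + (LBINT t=(1::real)..x. BD 0 t)"
    unfolding S0_def by (rule lbint_split[symmetric]) (rule smth_isCont[OF smth_bump])
  also have "(LBINT t=(1::real)..x. BD 0 t) = 0"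
    by (rule lbint_zero) (use x in \<open>auto intro: BD0_zero\<close>)
  finally show ?thesis by (simp add: I0_def)
qed

lemma S0_mono: "x \<le> y \<Longrightarrow> S0 x \<le> S0 y"
  by (rule DERIV_nonneg_imp_nondecreasing) (use S0_deriv BD0_nonneg in blast)+

lemma I0_pos: "I0 > 0"
proof -
  obtain l z where z: "0 < z" "z < 1" "DERIV S0 z :> l" "S0 1 - S0 0 = (1 - 0) * l"
    using MVT[of 0 1 S0] S0_deriv DERIV_isCont real_differentiable_def
    by (metis continuous_at_imp_continuous_on zero_less_one)
  have "l = BD 0 z" using DERIV_unique[OF z(3) S0_deriv] .
  then show ?thesis using z BD0_pos[of z] S0_left[of 0] by (simp add: I0_def)
qed

definition HH :: "real \<Rightarrow> real" where "HH x = S0 x / I0"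

lemma smth_HH: "smth HH"
proof -
  have "smth (\<lambda>x. (1/I0) * S0 x)"
    unfolding S0_def by (intro smth_cmult smth_antideriv smth_bump)
  then show ?thesis unfolding HH_def[abs_def] by simp
qed

lemma HH_left: "x \<le> 0 \<Longrightarrow> HH x = 0" by (simp add: HH_def S0_left)
lemma HH_right: "x \<ge> 1 \<Longrightarrow> HH x = 1" using I0_pos by (simp add: HH_def S0_right)
lemma HH_bounds: "0 \<le> HH x" "HH x \<le> 1"
proof -
  have "S0 (min x 0) \<le> S0 x" "S0 x \<le> S0 (max x 1)" by (auto intro: S0_mono)
  then have "0 \<le> S0 x" "S0 x \<le> I0" using S0_left[of "min x 0"] S0_right[of "max x 1"] by auto
  then show "0 \<le> HH x" "HH x \<le> 1" using I0_pos by (auto simp: HH_def)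
qed

lemma HH_deriv: "(HH has_real_derivative BD 0 x / I0) (at x)"
  unfolding HH_def[abs_def] using DERIV_cdivide[OF S0_deriv, of I0] by simp

definition sig :: "real \<Rightarrow> real \<Rightarrow> real \<Rightarrow> real" where
  "sig a e x = HH ((1/e) * x + (-(a+e)/e)) - HH ((1/e) * x + (-(1-2*e)/e))"

lemma smth_sig: "smth (sig a e)"
  unfolding sig_def[abs_def] by (intro smth_diff smth_affine smth_HH)

lemma sig_abs: "\<bar>sig a e x\<bar> \<le> 1"
  using HH_bounds[of "(1/e) * x + (-(a+e)/e)"] HH_bounds[of "(1/e) * x + (-(1-2*e)/e)"]
  by (simp add: sig_def abs_le_iff)

lemma sig_zero:
  assumes e: "e > 0" and ae: "a + 3*e \<le> 1" and x: "x \<le> a + e \<or> x \<ge> 1 - e"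
  shows "sig a e x = 0"
proof -
  have arg1: "(1/e) * x + (-(a+e)/e) = (x - (a+e))/e" using e by (simp add: field_simps)
  have arg2: "(1/e) * x + (-(1-2*e)/e) = (x - (1-2*e))/e" using e by (simp add: field_simps)
  show ?thesis
  proof (cases "x \<le> a + e")
    case True
    then have "(x - (a+e))/e \<le> 0" "(x - (1-2*e))/e \<le> 0" using e ae by (auto simp: divide_le_0_iff)
    then show ?thesis unfolding sig_def arg1 arg2 by (simp add: HH_left)
  next
    case False
    then have x1: "x \<ge> 1 - e" using x by auto
    have "(x - (a+e))/e \<ge> 1" "(x - (1-2*e))/e \<ge> 1" using e ae x1 by (auto simp: field_simps)
    then show ?thesis unfolding sig_def arg1 arg2 by (simp add: HH_right)
  qed
qed

lemma sig_one:
  assumes e: "e > 0" and x: "a + 2*e \<le> x" "x \<le> 1 - 2*e"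
  shows "sig a e x = 1"
proof -
  have arg1: "(1/e) * x + (-(a+e)/e) = (x - (a+e))/e" using e by (simp add: field_simps)
  have arg2: "(1/e) * x + (-(1-2*e)/e) = (x - (1-2*e))/e" using e by (simp add: field_simps)
  have "(x - (a+e))/e \<ge> 1" "(x - (1-2*e))/e \<le> 0" using e x by (auto simp: field_simps divide_le_0_iff)
  then show ?thesis unfolding sig_def arg1 arg2 by (simp add: HH_left HH_right)
qed

definition psi0 :: "real \<Rightarrow> real" where "psi0 x = 3 / I0 * BD 0 (3*x - 1)"

lemma smth_psi0: "smth psi0"
proof -
  have "smth (\<lambda>x. (3/I0) * BD 0 (3 * x + (-1)))" by (intro smth_cmult smth_affine smth_bump)
  then show ?thesis unfolding psi0_def[abs_def] by simp
qed

lemma psi0_zero: "x \<le> 1/3 \<or> x \<ge> 2/3 \<Longrightarrow> psi0 x = 0"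
  unfolding psi0_def by (subst BD0_zero) auto

lemma psi0_int: "(LBINT x=(0::real)..(1::real). psi0 x) = 1"
proof -
  have d: "((\<lambda>x. HH (3*x - 1)) has_real_derivative psi0 x) (at x)" for x
  proof -
    have lin: "((\<lambda>x. 3*x - 1) has_real_derivative 3) (at x)"
      using DERIV_diff[OF DERIV_cmult[OF DERIV_ident, of 3] DERIV_const[of 1]] by simp
    have "psi0 x = BD 0 (3*x-1) * 3 / I0" by (simp add: psi0_def)
    then show ?thesis using DERIV_chain2[OF HH_deriv lin] by simp
  qed
  have "(LBINT x=(0::real)..(1::real). psi0 x) = HH (3*1 - 1) - HH (3*0 - 1)"
  proof (rule interval_integral_FTC_finite)
    show "continuous_on {min 0 1..max 0 1} psi0" by (rule smth_cont[OF smth_psi0])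
    show "((\<lambda>x. HH (3*x - 1)) has_vector_derivative psi0 x) (at x within {min 0 1..max 0 1})" for x
      using d[of x] by (simp add: has_real_derivative_iff_has_vector_derivative has_vector_derivative_at_within)
  qed
  also have "\<dots> = 1" by (simp add: HH_left HH_right)
  finally show ?thesis .
qed

lemma test_from:
  fixes lo hi :: real
  assumes sm: "smth \<tau>" and lo: "0 < lo" and hi: "hi < 1" and lohi: "lo \<le> hi"
    and supp: "\<And>x. x < lo \<or> x > hi \<Longrightarrow> \<tau> x = 0"
    and int0: "(LBINT x=(0::real)..(1::real). \<tau> x) = 0"
  defines "\<phi> \<equiv> (\<lambda>x. LBINT t=(0::real)..x. \<tau> t)"
  shows "test_fun01 \<phi>" "deriv \<phi> = \<tau>" "\<And>x. (\<phi> has_real_derivative \<tau> x) (at x)"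
    "\<phi> 0 = 0" "\<phi> 1 = 0"
proof -
  have cont: "\<And>x. isCont \<tau> x" using smth_isCont[OF sm] .
  show d: "\<And>x. (\<phi> has_real_derivative \<tau> x) (at x)"
    unfolding \<phi>_def by (rule antideriv_has_deriv[OF cont])
  show "deriv \<phi> = \<tau>" using d DERIV_imp_deriv by blast
  show "\<phi> 0 = 0" by (simp add: \<phi>_def)
  show "\<phi> 1 = 0" by (simp add: \<phi>_def int0)
  have z: "\<phi> x = 0" if "x \<notin> {lo..hi}" for x
  proof (cases "x < lo")
    case True
    then show ?thesis unfolding \<phi>_def by (intro lbint_zero supp) (use lo in auto)
  next
    case False
    then have x: "x > hi" "x > lo" using that lohi by auto
    have "\<phi> x + (LBINT t=x..(1::real). \<tau> t) = (LBINT t=(0::real)..(1::real). \<tau> t)"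
      unfolding \<phi>_def by (rule lbint_split[OF cont])
    moreover have "(LBINT t=x..(1::real). \<tau> t) = 0" by (intro lbint_zero supp) (use x hi in auto)
    ultimately show ?thesis using int0 by simp
  qed
  have "smth \<phi>" unfolding \<phi>_def by (rule smth_antideriv[OF sm])
  then show "test_fun01 \<phi>" unfolding test_fun01_def
    using smth_smooth z lo hi by (intro conjI exI[of _ lo] exI[of _ hi]) blast+
qed

lemma ae_zero_from_rays:
  fixes v :: "real \<Rightarrow> real"
  assumes int: "integrable lborel v"
    and rays: "\<And>a. (\<integral>x. indicator {a<..} x * v x \<partial>lborel) = 0"
  shows "AE x in lborel. v x = 0"
proof -
  have vm[measurable]: "v \<in> borel_measurable lborel" using int by auto
  define P where "P x = ennreal (max 0 (v x))" for x
  define N where "N x = ennreal (max 0 (- v x))" for x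
  have Pm[measurable]: "P \<in> borel_measurable lborel" unfolding P_def by measurable
  have Nm[measurable]: "N \<in> borel_measurable lborel" unfolding N_def by measurable
  have ip: "integrable lborel (\<lambda>x. indicator {a<..} x * max 0 (v x))" for a
    by (rule Bochner_Integration.integrable_bound[OF integrable_abs[OF int]]) (auto split: split_indicator)
  have in_: "integrable lborel (\<lambda>x. indicator {a<..} x * max 0 (- v x))" for a
    by (rule Bochner_Integration.integrable_bound[OF integrable_abs[OF int]]) (auto split: split_indicator)
  have eP: "emeasure (density lborel P) {a<..} = ennreal (\<integral>x. indicator {a<..} x * max 0 (v x) \<partial>lborel)" for a
  proof -
    have "emeasure (density lborel P) {a<..} = (\<integral>\<^sup>+ x. P x * indicator {a<..} x \<partial>lborel)"
      by (rule emeasure_density) auto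
    also have "\<dots> = (\<integral>\<^sup>+ x. ennreal (indicator {a<..} x * max 0 (v x)) \<partial>lborel)"
      by (intro nn_integral_cong) (auto simp: P_def split: split_indicator)
    also have "\<dots> = ennreal (\<integral>x. indicator {a<..} x * max 0 (v x) \<partial>lborel)"
      by (rule nn_integral_eq_integral[OF ip]) auto
    finally show ?thesis .
  qed
  have eN: "emeasure (density lborel N) {a<..} = ennreal (\<integral>x. indicator {a<..} x * max 0 (- v x) \<partial>lborel)" for a
  proof -
    have "emeasure (density lborel N) {a<..} = (\<integral>\<^sup>+ x. N x * indicator {a<..} x \<partial>lborel)"
      by (rule emeasure_density) auto
    also have "\<dots> = (\<integral>\<^sup>+ x. ennreal (indicator {a<..} x * max 0 (- v x)) \<partial>lborel)"
      by (intro nn_integral_cong) (auto simp: N_def split: split_indicator)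
    also have "\<dots> = ennreal (\<integral>x. indicator {a<..} x * max 0 (- v x) \<partial>lborel)"
      by (rule nn_integral_eq_integral[OF in_]) auto
    finally show ?thesis .
  qed
  have eq: "(\<integral>x. indicator {a<..} x * max 0 (v x) \<partial>lborel) = (\<integral>x. indicator {a<..} x * max 0 (- v x) \<partial>lborel)" for a
  proof -
    have "(\<integral>x. indicator {a<..} x * max 0 (v x) \<partial>lborel) - (\<integral>x. indicator {a<..} x * max 0 (- v x) \<partial>lborel)
       = (\<integral>x. indicator {a<..} x * max 0 (v x) - indicator {a<..} x * max 0 (- v x) \<partial>lborel)"
      by (rule Bochner_Integration.integral_diff[OF ip in_, symmetric])
    also have "\<dots> = (\<integral>x. indicator {a<..} x * v x \<partial>lborel)"
      by (intro Bochner_Integration.integral_cong) (auto simp: max_def)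
    finally show ?thesis using rays[of a] by simp
  qed
  have "density lborel P = density lborel N"
  proof (rule measure_eqI_lessThan)
    show "sets (density lborel P) = sets borel" "sets (density lborel N) = sets borel" by auto
    show "emeasure (density lborel P) {x<..} < \<infinity>" for x using eP by simp
    show "emeasure (density lborel P) {x<..} = emeasure (density lborel N) {x<..}" for x
      using eP eN eq by simp
  qed
  then have "AE x in lborel. P x = N x"
    by (intro sigma_finite_measure.density_unique[OF sigma_finite_lborel]) auto
  then show ?thesis
    by eventually_elim (auto simp: P_def N_def max_def split: if_splits)
qed

lemma lbint_0_eq:
  fixes h :: "real \<Rightarrow> real" and x :: real
  assumes hz: "\<And>t. t \<le> 0 \<Longrightarrow> h t = 0" and x: "0 \<le> x"
  shows "(LBINT t=(0::real)..x. h t) = (\<integral>t. (if t < x then 1 else 0) * h t \<partial>lborel)"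
proof -
  have "(LBINT t=(0::real)..x. h t) = (\<integral>t. indicator {0<..<x} t * h t \<partial>lborel)"
    using x by (simp add: interval_lebesgue_integral_def set_lebesgue_integral_def)
  also have "\<dots> = (\<integral>t. (if t < x then 1 else 0) * h t \<partial>lborel)"
    by (intro Bochner_Integration.integral_cong) (auto simp: hz split: split_indicator)
  finally show ?thesis .
qed

lemma fubini_G:
  fixes h \<phi> \<phi>' :: "real \<Rightarrow> real"
  assumes hint: "integrable lborel h"
    and hz: "\<And>t. t \<notin> {0<..<1} \<Longrightarrow> h t = 0"
    and dphi: "\<And>x. (\<phi> has_real_derivative \<phi>' x) (at x)"
    and cphi': "\<And>x. isCont \<phi>' x"
    and phi1: "\<phi> 1 = 0"
  shows "(\<integral>x. indicator {0<..<1} x * (LBINT t=(0::real)..x. h t) * \<phi>' x \<partial>lborel) = - (\<integral>t. h t * \<phi> t \<partial>lborel)"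
proof -
  have hm[measurable]: "h \<in> borel_measurable lborel" using hint by auto
  have pm[measurable]: "\<phi>' \<in> borel_measurable borel"
    by (intro borel_measurable_continuous_onI continuous_at_imp_continuous_on ballI cphi')
  have "compact (\<phi>' ` {0..1})"
    by (intro compact_continuous_image continuous_at_imp_continuous_on ballI cphi') auto
  then obtain K where K: "\<And>y. y \<in> \<phi>' ` {0..1} \<Longrightarrow> norm y \<le> K"
    using compact_imp_bounded bounded_iff by metis
  have Kx: "\<bar>\<phi>' x\<bar> \<le> K" if "x \<in> {0..1}" for x using K that by auto
  have K0: "K \<ge> 0" using Kx[of 0] by auto
  define F where "F t x = h t * (indicator {0<..<1} x * (if t < x then 1 else 0) * \<phi>' x)" for t x :: real
  define B where "B t x = \<bar>h t\<bar> * (K * indicator {0<..<1} x)" for t x :: real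
  have Fm[measurable]: "case_prod F \<in> borel_measurable (lborel \<Otimes>\<^sub>M lborel)"
    unfolding F_def by measurable
  have Bm[measurable]: "case_prod B \<in> borel_measurable (lborel \<Otimes>\<^sub>M lborel)"
    unfolding B_def by measurable
  have ind_int: "integrable lborel (\<lambda>x. K * indicator {0<..<1::real} x)"
    by (intro integrable_mult_right integrable_real_indicator) auto
  have Bint: "integrable (lborel \<Otimes>\<^sub>M lborel) (case_prod B)"
  proof (rule lborel_pair.Fubini_integrable)
    have "(\<integral>x. norm (case_prod B (t, x)) \<partial>lborel) = \<bar>h t\<bar> * K" for t
    proof -
      have "(\<integral>x. norm (case_prod B (t, x)) \<partial>lborel) = (\<integral>x. \<bar>h t\<bar> * (K * indicator {0<..<1::real} x) \<partial>lborel)"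
        using K0 by (intro Bochner_Integration.integral_cong) (auto simp: B_def abs_mult split: split_indicator)
      also have "\<dots> = \<bar>h t\<bar> * K" by simp
      finally show ?thesis .
    qed
    then show "integrable lborel (\<lambda>t. \<integral>x. norm (case_prod B (t, x)) \<partial>lborel)"
      using hint by simp
    show "AE t in lborel. integrable lborel (\<lambda>x. case_prod B (t, x))"
      using ind_int by (simp add: B_def)
  qed simp
  have Fint: "integrable (lborel \<Otimes>\<^sub>M lborel) (case_prod F)"
  proof (rule Bochner_Integration.integrable_bound[OF Bint Fm])
    show "AE p in lborel \<Otimes>\<^sub>M lborel. norm (case_prod F p) \<le> norm (case_prod B p)"
    proof (intro AE_I2)
      fix p :: "real \<times> real"
      obtain t x where p: "p = (t, x)" by (cases p)
      have "\<bar>F t x\<bar> \<le> \<bar>B t x\<bar>"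
      proof (cases "x \<in> {0<..<1} \<and> t < x")
        case True
        then have "\<bar>\<phi>' x\<bar> \<le> K" using Kx by auto
        then show ?thesis using True by (auto simp: F_def B_def abs_mult intro: mult_left_mono)
      next
        case False then show ?thesis by (auto simp: F_def B_def)
      qed
      then show "norm (case_prod F p) \<le> norm (case_prod B p)" by (simp add: p)
    qed
  qed
  have fub: "(\<integral>x. (\<integral>t. F t x \<partial>lborel) \<partial>lborel) = (\<integral>t. (\<integral>x. F t x \<partial>lborel) \<partial>lborel)"
    by (rule lborel_pair.Fubini_integral[OF Fint])
  have inner1: "(\<integral>t. F t x \<partial>lborel) = indicator {0<..<1} x * (LBINT t=(0::real)..x. h t) * \<phi>' x" for x
  proof (cases "x \<in> {0<..<1}")
    case True
    have "(\<integral>t. F t x \<partial>lborel) = (\<integral>t. (indicator {0<..<1} x * \<phi>' x) * ((if t < x then 1 else 0) * h t) \<partial>lborel)"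
      by (intro Bochner_Integration.integral_cong) (auto simp: F_def)
    also have "\<dots> = (indicator {0<..<1} x * \<phi>' x) * (\<integral>t. (if t < x then 1 else 0) * h t \<partial>lborel)"
      by (rule integral_mult_right_zero)
    also have "(\<integral>t. (if t < x then 1 else 0) * h t \<partial>lborel) = (LBINT t=(0::real)..x. h t)"
      using True by (intro lbint_0_eq[symmetric]) (auto simp: hz)
    finally show ?thesis by simp
  next
    case False
    then show ?thesis by (simp add: F_def)
  qed
  have inner2: "(\<integral>x. F t x \<partial>lborel) = - (h t * \<phi> t)" for t
  proof (cases "t \<in> {0<..<1}")
    case True
    have "(\<integral>x. F t x \<partial>lborel) = h t * (\<integral>x. indicator {t<..<1} x * \<phi>' x \<partial>lborel)"
    proof -
      have "(\<integral>x. F t x \<partial>lborel) = (\<integral>x. h t * (indicator {t<..<1} x * \<phi>' x) \<partial>lborel)"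
        using True by (intro Bochner_Integration.integral_cong) (auto simp: F_def split: split_indicator)
      then show ?thesis by simp
    qed
    also have "(\<integral>x. indicator {t<..<1} x * \<phi>' x \<partial>lborel) = (LBINT x=t..(1::real). \<phi>' x)"
      using True by (simp add: interval_lebesgue_integral_def set_lebesgue_integral_def)
    also have "\<dots> = \<phi> 1 - \<phi> t"
    proof (rule interval_integral_FTC_finite)
      show "continuous_on {min t 1..max t 1} \<phi>'" by (intro continuous_at_imp_continuous_on ballI cphi')
      show "(\<phi> has_vector_derivative \<phi>' x) (at x within {min t 1..max t 1})" for x
        using dphi[of x] by (simp add: has_real_derivative_iff_has_vector_derivative has_vector_derivative_at_within)
    qed
    finally show ?thesis using phi1 by simp
  next
    case False
    then show ?thesis by (simp add: F_def hz)
  qed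
  show ?thesis using fub unfolding inner1 inner2 by simp
qed

lemma L2_meas:
  assumes "L2_01 f"
  shows "(\<lambda>x. indicator {0<..<1::real} x * f x) \<in> borel_measurable lborel"
  using assms unfolding L2_01_def set_borel_measurable_def by simp

lemma L2_sq_int:
  assumes "L2_01 f"
  shows "integrable lborel (\<lambda>x. indicator {0<..<1::real} x * (f x)\<^sup>2)"
  using assms unfolding L2_01_def set_integrable_def by simp

lemma L2_int:
  assumes "L2_01 f"
  shows "integrable lborel (\<lambda>x. indicator {0<..<1::real} x * f x)"
proof (rule Bochner_Integration.integrable_bound)
  show "integrable lborel (\<lambda>x. indicator {0<..<1::real} x + indicator {0<..<1::real} x * (f x)\<^sup>2)"
    by (intro Bochner_Integration.integrable_add L2_sq_int[OF assms] integrable_real_indicator) auto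
  show "(\<lambda>x. indicator {0<..<1::real} x * f x) \<in> borel_measurable lborel" by (rule L2_meas[OF assms])
  show "AE x in lborel. norm (indicator {0<..<1::real} x * f x) \<le> norm (indicator {0<..<1::real} x + indicator {0<..<1::real} x * (f x)\<^sup>2)"
  proof (intro AE_I2)
    fix x
    have "0 \<le> (\<bar>f x\<bar> - 1)\<^sup>2" by simp
    hence "2*\<bar>f x\<bar> \<le> \<bar>f x\<bar>\<^sup>2 + 1" by (simp add: power2_eq_square algebra_simps)
    hence "\<bar>f x\<bar> \<le> 1 + (f x)\<^sup>2" using zero_le_power2[of "f x"] by (simp add: power2_abs)
    then show "norm (indicator {0<..<1::real} x * f x) \<le> norm (indicator {0<..<1::real} x + indicator {0<..<1::real} x * (f x)\<^sup>2)"
      by (auto split: split_indicator)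
  qed
qed

definition GG :: "(real \<Rightarrow> real) \<Rightarrow> real \<Rightarrow> real" where
  "GG h x = (\<integral>t. (if t < x then h t else 0) \<partial>lborel)"

lemma GG_meas[measurable]:
  assumes [measurable]: "h \<in> borel_measurable borel"
  shows "GG h \<in> borel_measurable borel"
  unfolding GG_def[abs_def] by measurable

lemma int_if_lt:
  assumes "integrable lborel (h::real\<Rightarrow>real)"
  shows "integrable lborel (\<lambda>t. if t < x then h t else 0)"
proof -
  have "integrable lborel (\<lambda>t. indicator {..<x} t * h t)"
    using integrable_mult_indicator[OF _ assms, of "{..<x}"] by simp
  moreover have "(\<lambda>t. indicator {..<x} t * h t) = (\<lambda>t. if t < x then h t else 0)"
    by (auto split: split_indicator)
  ultimately show ?thesis by simp
qed

lemma GG_bound: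
  assumes "integrable lborel h"
  shows "\<bar>GG h x\<bar> \<le> (\<integral>t. \<bar>h t\<bar> \<partial>lborel)"
proof -
  have "\<bar>GG h x\<bar> \<le> (\<integral>t. norm (if t < x then h t else 0) \<partial>lborel)"
    unfolding GG_def using integral_norm_bound by (metis real_norm_def)
  also have "\<dots> \<le> (\<integral>t. \<bar>h t\<bar> \<partial>lborel)"
    using assms int_if_lt[OF assms, of x]
    by (intro integral_mono) auto
  finally show ?thesis .
qed

lemma GG_eq_lbint:
  assumes "\<And>t. t \<le> 0 \<Longrightarrow> h t = 0" "0 \<le> x"
  shows "GG h x = (LBINT t=(0::real)..x. h t)"
proof -
  have "GG h x = (\<integral>t. (if t < x then 1 else 0) * h t \<partial>lborel)"
    unfolding GG_def by (intro Bochner_Integration.integral_cong) auto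
  then show ?thesis using lbint_0_eq[OF assms] by simp
qed

lemma cont_bound01:
  assumes "\<And>x. isCont (f::real\<Rightarrow>real) x"
  obtains K where "K \<ge> 0" "\<And>x. x \<in> {0..1} \<Longrightarrow> \<bar>f x\<bar> \<le> K"
proof -
  have "compact (f ` {0..1})"
    by (intro compact_continuous_image continuous_at_imp_continuous_on ballI assms) auto
  then obtain K where K: "\<And>y. y \<in> f ` {0..1} \<Longrightarrow> norm y \<le> K"
    using compact_imp_bounded bounded_iff by metis
  have "\<bar>f x\<bar> \<le> K" if "x \<in> {0..1}" for x using K that by auto
  moreover have "K \<ge> 0" using K[of "f 0"] by auto
  ultimately show ?thesis using that by blast
qed

lemma weak_zero:
  assumes W: "W12_01 m g" and tf: "test_fun01 \<phi>"
    and dphi: "\<And>x. (\<phi> has_real_derivative \<tau> x) (at x)"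
    and ct: "\<And>x. isCont \<tau> x" and p1: "\<phi> 1 = 0"
  shows "(\<integral>x. indicator {0<..<1} x * (m x - GG (\<lambda>x. indicator {0<..<1} x * g x) x) * \<tau> x \<partial>lborel) = 0"
proof -
  define g1 where "g1 = (\<lambda>x. indicator {0<..<1::real} x * g x)"
  have Lm: "L2_01 m" and Lg: "L2_01 g" using W by (auto simp: W12_01_def)
  have weak: "(LINT x:{0<..<1}|lborel. m x * deriv \<phi> x) = - (LINT x:{0<..<1}|lborel. g x * \<phi> x)"
    using W tf by (auto simp: W12_01_def)
  have dd: "deriv \<phi> = \<tau>" using dphi DERIV_imp_deriv by blast
  have g1int: "integrable lborel g1" using L2_int[OF Lg] by (simp add: g1_def)
  have g1m[measurable]: "g1 \<in> borel_measurable borel" using g1int by auto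
  have m1int: "integrable lborel (\<lambda>x. indicator {0<..<1::real} x * m x)" by (rule L2_int[OF Lm])
  have m1m[measurable]: "(\<lambda>x. indicator {0<..<1::real} x * m x) \<in> borel_measurable borel" using m1int by auto
  have taum[measurable]: "\<tau> \<in> borel_measurable borel"
    by (intro borel_measurable_continuous_onI continuous_at_imp_continuous_on ballI ct)
  have g1z: "\<And>t. t \<notin> {0<..<1} \<Longrightarrow> g1 t = 0" by (simp add: g1_def)
  have fub: "(\<integral>x. indicator {0<..<1} x * (LBINT t=(0::real)..x. g1 t) * \<tau> x \<partial>lborel) = - (\<integral>t. g1 t * \<phi> t \<partial>lborel)"
    by (rule fubini_G[OF g1int g1z dphi ct p1])
  have e1: "(\<integral>x. indicator {0<..<1} x * (LBINT t=(0::real)..x. g1 t) * \<tau> x \<partial>lborel)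
      = (\<integral>x. indicator {0<..<1} x * GG g1 x * \<tau> x \<partial>lborel)"
    by (intro Bochner_Integration.integral_cong refl)
       (auto simp: GG_eq_lbint g1z split: split_indicator)
  have e2: "(LINT x:{0<..<1}|lborel. m x * deriv \<phi> x) = (\<integral>x. indicator {0<..<1} x * m x * \<tau> x \<partial>lborel)"
    by (simp add: set_lebesgue_integral_def dd mult.assoc)
  have e3: "(LINT x:{0<..<1}|lborel. g x * \<phi> x) = (\<integral>t. g1 t * \<phi> t \<partial>lborel)"
    by (simp add: set_lebesgue_integral_def g1_def mult.assoc)
  obtain K where K: "K \<ge> 0" "\<And>x. x \<in> {0..1} \<Longrightarrow> \<bar>\<tau> x\<bar> \<le> K" using cont_bound01[OF ct] by blast
  define NG where "NG = (\<integral>t. \<bar>g1 t\<bar> \<partial>lborel)"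
  have i1: "integrable lborel (\<lambda>x. indicator {0<..<1} x * m x * \<tau> x)"
  proof (rule Bochner_Integration.integrable_bound[OF integrable_mult_right[OF integrable_abs[OF m1int], of K]])
    show "(\<lambda>x. indicator {0<..<1} x * m x * \<tau> x) \<in> borel_measurable lborel" by measurable
    show "AE x in lborel. norm (indicator {0<..<1} x * m x * \<tau> x) \<le> norm (K * \<bar>indicator {0<..<1::real} x * m x\<bar>)"
    proof (intro AE_I2)
      fix x :: real
      show "norm (indicator {0<..<1} x * m x * \<tau> x) \<le> norm (K * \<bar>indicator {0<..<1::real} x * m x\<bar>)"
      proof (cases "x \<in> {0<..<1}")
        case True
        then have "\<bar>\<tau> x\<bar> \<le> K" using K by auto
        then show ?thesis using True K(1) by (simp add: abs_mult mult_right_mono mult.commute)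
      qed simp
    qed
  qed
  have ib: "integrable lborel (\<lambda>x. K * NG * indicator {0<..<1::real} x)"
    by (intro integrable_mult_right integrable_real_indicator) auto
  have i2: "integrable lborel (\<lambda>x. indicator {0<..<1} x * GG g1 x * \<tau> x)"
  proof (rule Bochner_Integration.integrable_bound[OF ib])
    show "(\<lambda>x. indicator {0<..<1} x * GG g1 x * \<tau> x) \<in> borel_measurable lborel" by measurable
    show "AE x in lborel. norm (indicator {0<..<1} x * GG g1 x * \<tau> x) \<le> norm (K * NG * indicator {0<..<1::real} x)"
    proof (intro AE_I2)
      fix x :: real
      show "norm (indicator {0<..<1} x * GG g1 x * \<tau> x) \<le> norm (K * NG * indicator {0<..<1::real} x)"
      proof (cases "x \<in> {0<..<1}")
        case True
        then have "\<bar>\<tau> x\<bar> \<le> K" using K by auto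
        moreover have "\<bar>GG g1 x\<bar> \<le> NG" unfolding NG_def by (rule GG_bound[OF g1int])
        ultimately have "\<bar>GG g1 x\<bar> * \<bar>\<tau> x\<bar> \<le> NG * K" by (intro mult_mono) auto
        moreover have "NG \<ge> 0" unfolding NG_def by (rule integral_nonneg_AE) auto
        ultimately show ?thesis using True K(1) by (simp add: abs_mult mult.commute)
      qed simp
    qed
  qed
  have "(\<integral>x. indicator {0<..<1} x * (m x - GG g1 x) * \<tau> x \<partial>lborel)
     = (\<integral>x. indicator {0<..<1} x * m x * \<tau> x - indicator {0<..<1} x * GG g1 x * \<tau> x \<partial>lborel)"
    by (intro Bochner_Integration.integral_cong) (auto simp: algebra_simps)
  also have "\<dots> = (\<integral>x. indicator {0<..<1} x * m x * \<tau> x \<partial>lborel) - (\<integral>x. indicator {0<..<1} x * GG g1 x * \<tau> x \<partial>lborel)"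
    by (rule Bochner_Integration.integral_diff[OF i1 i2])
  also have "\<dots> = 0" using weak fub e1 e2 e3 by simp
  finally show ?thesis by (simp add: g1_def)
qed

lemma int_bounded_mult:
  fixes w f :: "real \<Rightarrow> real"
  assumes "integrable lborel w" "f \<in> borel_measurable borel" "\<And>x. \<bar>f x\<bar> \<le> B"
  shows "integrable lborel (\<lambda>x. w x * f x)"
proof (rule Bochner_Integration.integrable_bound[OF integrable_mult_right[OF integrable_abs[OF assms(1)], of B]])
  show "(\<lambda>x. w x * f x) \<in> borel_measurable lborel" using assms by measurable
  show "AE x in lborel. norm (w x * f x) \<le> norm (B * \<bar>w x\<bar>)"
  proof (intro AE_I2)
    fix x
    have "\<bar>w x\<bar> * \<bar>f x\<bar> \<le> \<bar>w x\<bar> * B" by (intro mult_left_mono assms(3)) auto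
    moreover have "B \<ge> 0" using assms(3)[of x] by linarith
    ultimately show "norm (w x * f x) \<le> norm (B * \<bar>w x\<bar>)" by (simp add: abs_mult mult.commute)
  qed
qed

lemma sig_meas[measurable]: "sig a e \<in> borel_measurable borel"
  by (intro borel_measurable_continuous_onI smth_cont smth_sig)

lemma psi0_meas[measurable]: "psi0 \<in> borel_measurable borel"
  by (intro borel_measurable_continuous_onI smth_cont smth_psi0)

lemma psi0_bounded: obtains B where "\<And>x. \<bar>psi0 x\<bar> \<le> B"
proof -
  obtain K where K: "K \<ge> 0" "\<And>x. x \<in> {0..1} \<Longrightarrow> \<bar>psi0 x\<bar> \<le> K"
    using cont_bound01[OF smth_isCont[OF smth_psi0]] by blast
  have "\<bar>psi0 x\<bar> \<le> K" for x
  proof (cases "x \<in> {0..1}")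
    case False then show ?thesis using psi0_zero[of x] K(1) by auto
  qed (use K in auto)
  then show ?thesis using that by blast
qed

lemma lbint01_eq: fixes f :: "real \<Rightarrow> real" shows "(LBINT x=(0::real)..(1::real). f x) = (\<integral>x. indicator {0<..<1} x * f x \<partial>lborel)"
  by (simp add: interval_lebesgue_integral_def set_lebesgue_integral_def)

lemma sig_test_identity:
  assumes W: "W12_01 m g" and a: "0 \<le> a" and e: "0 < e" "a + 3*e \<le> 1"
  defines "w \<equiv> \<lambda>x. indicator {0<..<1} x * (m x - GG (\<lambda>x. indicator {0<..<1} x * g x) x)"
  shows "(\<integral>x. w x * (sig a e x - (LBINT x=(0::real)..(1::real). sig a e x) * psi0 x) \<partial>lborel) = 0"
proof -
  define c where "c = (LBINT x=(0::real)..(1::real). sig a e x)"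
  define \<tau> where "\<tau> = (\<lambda>x. sig a e x - c * psi0 x)"
  have smt: "smth \<tau>" unfolding \<tau>_def by (intro smth_diff smth_sig smth_cmult smth_psi0)
  have ci: "\<And>x. isCont \<tau> x" by (rule smth_isCont[OF smt])
  have supp: "\<tau> x = 0" if "x < min (a+e) (1/3) \<or> x > max (1-e) (2/3)" for x
  proof -
    have "sig a e x = 0" by (rule sig_zero) (use that e in auto)
    moreover have "psi0 x = 0" by (rule psi0_zero) (use that in auto)
    ultimately show ?thesis by (simp add: \<tau>_def)
  qed
  have int0: "(LBINT x=(0::real)..(1::real). \<tau> x) = 0"
  proof -
    have i1: "interval_lebesgue_integrable lborel (ereal 0) (ereal 1) (sig a e)"
      by (intro interval_integrable_isCont smth_isCont smth_sig)
    have i2: "interval_lebesgue_integrable lborel (ereal 0) (ereal 1) (\<lambda>x. c * psi0 x)"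
      by (intro interval_integrable_isCont smth_isCont smth_cmult smth_psi0)
    have "(LBINT x=(0::real)..(1::real). \<tau> x) = c - (LBINT x=(0::real)..(1::real). c * psi0 x)"
      unfolding \<tau>_def using interval_lebesgue_integral_diff(2)[OF i1 i2] by (simp add: c_def)
    also have "(LBINT x=(0::real)..(1::real). c * psi0 x) = c" using psi0_int by simp
    finally show ?thesis by simp
  qed
  have lo: "0 < min (a+e) (1/3)" using a e by simp
  have hi: "max (1-e) (2/3) < 1" using e by simp
  have lohi: "min (a+e) (1/3) \<le> max (1-e) (2/3)" by simp
  note T = test_from[OF smt lo hi lohi supp int0]
  have "(\<integral>x. indicator {0<..<1} x * (m x - GG (\<lambda>x. indicator {0<..<1} x * g x) x) * \<tau> x \<partial>lborel) = 0"
    by (rule weak_zero[OF W T(1) T(3) ci T(5)])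
  then show ?thesis by (simp add: w_def \<tau>_def c_def mult.assoc)
qed

lemma w_int:
  assumes W: "W12_01 m g"
  shows "integrable lborel (\<lambda>x. indicator {0<..<1::real} x * (m x - GG (\<lambda>x. indicator {0<..<1} x * g x) x))"
proof -
  define g1 where "g1 = (\<lambda>x. indicator {0<..<1::real} x * g x)"
  have Lm: "L2_01 m" and Lg: "L2_01 g" using W by (auto simp: W12_01_def)
  have g1int: "integrable lborel g1" using L2_int[OF Lg] by (simp add: g1_def)
  have g1m[measurable]: "g1 \<in> borel_measurable borel" using g1int by auto
  have m1int: "integrable lborel (\<lambda>x. indicator {0<..<1::real} x * m x)" by (rule L2_int[OF Lm])
  have i2: "integrable lborel (\<lambda>x. indicator {0<..<1::real} x * GG g1 x)"
  proof -
    have "integrable lborel (\<lambda>x. indicator {0<..<1::real} x * GG g1 x)"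
      by (rule int_bounded_mult[OF integrable_real_indicator, of _ _ "\<integral>t. \<bar>g1 t\<bar> \<partial>lborel"])
         (auto intro: GG_bound[OF g1int])
    then show ?thesis .
  qed
  have "integrable lborel (\<lambda>x. indicator {0<..<1::real} x * m x - indicator {0<..<1::real} x * GG g1 x)"
    by (rule Bochner_Integration.integrable_diff[OF m1int i2])
  then show ?thesis unfolding g1_def right_diff_distrib .
qed

lemma sig_lim:
  fixes a x :: real
  assumes a: "0 \<le> a" "a < 1"
  defines "e \<equiv> \<lambda>n. (1-a)/8 * inverse (real (Suc n))"
  shows "(\<lambda>n. sig a (e n) x) \<longlonglongrightarrow> indicator {a<..<1} x"
proof -
  have epos: "e n > 0" for n using a by (simp add: e_def)
  have ele: "e n \<le> (1-a)/8" for n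
  proof -
    have "inverse (real (Suc n)) \<le> 1" by (simp add: inverse_le_1_iff)
    then show ?thesis using a unfolding e_def by (intro mult_left_le) auto
  qed
  have e3: "a + 3 * e n \<le> 1" for n
  proof -
    have "3 * e n \<le> 3 * ((1-a)/8)" using ele[of n] by linarith
    moreover have "3 * ((1-a)/8) \<le> 1 - a" using a by (simp add: field_simps)
    ultimately show ?thesis by (smt (verit))
  qed
  have elim: "e \<longlonglongrightarrow> 0"
    unfolding e_def using tendsto_mult_right_zero[OF LIMSEQ_inverse_real_of_nat] by simp
  show ?thesis
  proof (cases "a < x \<and> x < 1")
    case True
    define d where "d = min (x - a) (1 - x) / 2"
    have d: "d > 0" using True by (simp add: d_def)
    have "eventually (\<lambda>n. e n < d) sequentially"
      using order_tendstoD(2)[OF elim d] .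
    then have "eventually (\<lambda>n. sig a (e n) x = 1) sequentially"
    proof (rule eventually_mono)
      fix n assume "e n < d"
      then show "sig a (e n) x = 1"
        by (intro sig_one[OF epos]) (auto simp: d_def)
    qed
    then have "(\<lambda>n. sig a (e n) x) \<longlonglongrightarrow> 1" by (rule tendsto_eventually)
    then show ?thesis using True by simp
  next
    case False
    have "sig a (e n) x = 0" for n
    proof (rule sig_zero[OF epos e3])
      show "x \<le> a + e n \<or> 1 - e n \<le> x" using False epos[of n] by auto
    qed
    then show ?thesis using False by simp
  qed
qed

lemma ray_identity:
  assumes W: "W12_01 m g" and a: "0 \<le> a" "a < 1"
    and wdef: "w = (\<lambda>x. indicator {0<..<1::real} x * (m x - GG (\<lambda>x. indicator {0<..<1} x * g x) x))"
  shows "(\<integral>x. indicator {a<..} x * w x \<partial>lborel) = (1 - a) * (\<integral>x. w x * psi0 x \<partial>lborel)"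
proof -
  define e where "e = (\<lambda>n. (1-a)/8 * inverse (real (Suc n)))"
  define c where "c n = (LBINT x=(0::real)..(1::real). sig a (e n) x)" for n
  define C0 where "C0 = (\<integral>x. w x * psi0 x \<partial>lborel)"
  have wint: "integrable lborel w" using w_int[OF W] wdef by simp
  have wm[measurable]: "w \<in> borel_measurable borel" using wint by auto
  have wz: "w x = 0" if "x \<notin> {0<..<1}" for x using that wdef by simp
  have epos: "e n > 0" for n using a by (simp add: e_def)
  have ele: "e n \<le> (1-a)/8" for n
  proof -
    have "inverse (real (Suc n)) \<le> 1" by (simp add: inverse_le_1_iff)
    then show ?thesis using a unfolding e_def by (intro mult_left_le) auto
  qed
  have e3: "a + 3 * e n \<le> 1" for n
  proof -
    have "3 * e n \<le> 3 * ((1-a)/8)" using ele[of n] by linarith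
    moreover have "3 * ((1-a)/8) \<le> 1 - a" using a by (simp add: field_simps)
    ultimately show ?thesis by (smt (verit))
  qed
  obtain B where B: "\<And>x. \<bar>psi0 x\<bar> \<le> B" using psi0_bounded by blast
  have ws: "integrable lborel (\<lambda>x. w x * sig a (e n) x)" for n
    by (rule int_bounded_mult[OF wint sig_meas sig_abs])
  have wp: "integrable lborel (\<lambda>x. w x * psi0 x)"
    by (rule int_bounded_mult[OF wint psi0_meas B])
  have eq: "(\<integral>x. w x * sig a (e n) x \<partial>lborel) = c n * C0" for n
  proof -
    have "0 = (\<integral>x. w x * (sig a (e n) x - c n * psi0 x) \<partial>lborel)"
      using sig_test_identity[OF W a(1) epos e3, of n] by (simp add: wdef c_def)
    also have "\<dots> = (\<integral>x. w x * sig a (e n) x - c n * (w x * psi0 x) \<partial>lborel)"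
      by (intro Bochner_Integration.integral_cong) (auto simp: algebra_simps)
    also have "\<dots> = (\<integral>x. w x * sig a (e n) x \<partial>lborel) - c n * C0"
      using Bochner_Integration.integral_diff[OF ws integrable_mult_right[OF wp, of "c n"]]
      by (simp add: C0_def)
    finally show ?thesis by simp
  qed
  have L1: "(\<lambda>n. \<integral>x. w x * sig a (e n) x \<partial>lborel) \<longlonglongrightarrow> (\<integral>x. w x * indicator {a<..<1} x \<partial>lborel)"
  proof (rule integral_dominated_convergence[where w="\<lambda>x. \<bar>w x\<bar>"])
    show "(\<lambda>x. w x * indicator {a<..<1} x) \<in> borel_measurable lborel" by measurable
    show "\<And>n. (\<lambda>x. w x * sig a (e n) x) \<in> borel_measurable lborel" by measurable
    show "integrable lborel (\<lambda>x. \<bar>w x\<bar>)" using wint by simp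
    show "AE x in lborel. (\<lambda>n. w x * sig a (e n) x) \<longlonglongrightarrow> w x * indicator {a<..<1} x"
      using sig_lim[OF a] unfolding e_def by (intro AE_I2 tendsto_mult_left) simp
    show "\<And>n. AE x in lborel. norm (w x * sig a (e n) x) \<le> \<bar>w x\<bar>"
      using sig_abs by (intro AE_I2) (simp add: abs_mult mult_left_le)
  qed
  have L2: "c \<longlonglongrightarrow> (\<integral>x. indicator {0<..<1::real} x * indicator {a<..<1} x \<partial>lborel)"
    unfolding c_def lbint01_eq
  proof (rule integral_dominated_convergence[where w="indicator {0<..<1::real}"])
    show "(\<lambda>x. indicator {0<..<1::real} x * indicator {a<..<1} x :: real) \<in> borel_measurable lborel" by measurable
    show "\<And>n. (\<lambda>x. indicator {0<..<1::real} x * sig a (e n) x) \<in> borel_measurable lborel" by measurable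
    show "integrable lborel (indicator {0<..<1::real} :: real \<Rightarrow> real)" by auto
    show "AE x in lborel. (\<lambda>n. indicator {0<..<1::real} x * sig a (e n) x) \<longlonglongrightarrow> indicator {0<..<1::real} x * indicator {a<..<1} x"
      using sig_lim[OF a] unfolding e_def by (intro AE_I2 tendsto_mult_left) simp
    show "\<And>n. AE x in lborel. norm (indicator {0<..<1::real} x * sig a (e n) x) \<le> indicator {0<..<1::real} x"
      using sig_abs by (intro AE_I2) (auto simp: abs_mult split: split_indicator)
  qed
  have m01: "(\<integral>x. (indicator {0<..<1::real} x * indicator {a<..<1} x :: real) \<partial>lborel) = 1 - a"
  proof -
    have "(\<integral>x. (indicator {0<..<1::real} x * indicator {a<..<1} x :: real) \<partial>lborel) = (\<integral>x. (indicator {a<..<1::real} x :: real) \<partial>lborel)"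
      using a by (intro Bochner_Integration.integral_cong) (auto split: split_indicator)
    also have "\<dots> = 1 - a" using a by simp
    finally show ?thesis .
  qed
  have "(\<lambda>n. c n * C0) \<longlonglongrightarrow> (1 - a) * C0"
    using tendsto_mult_right[OF L2, of C0] m01 by simp
  moreover have "(\<lambda>n. c n * C0) \<longlonglongrightarrow> (\<integral>x. w x * indicator {a<..<1} x \<partial>lborel)"
    using L1 eq by simp
  ultimately have "(\<integral>x. w x * indicator {a<..<1} x \<partial>lborel) = (1 - a) * C0"
    using LIMSEQ_unique by blast
  moreover have "(\<integral>x. w x * indicator {a<..<1} x \<partial>lborel) = (\<integral>x. indicator {a<..} x * w x \<partial>lborel)"
    using a wz by (intro Bochner_Integration.integral_cong) (auto split: split_indicator)
  ultimately show ?thesis by (simp add: C0_def)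
qed

lemma W12_rep:
  assumes W: "W12_01 m g"
  shows "\<exists>C. AE x in lborel. x \<in> {0<..<1} \<longrightarrow> m x = C + GG (\<lambda>x. indicator {0<..<1} x * g x) x"
proof -
  define w where "w = (\<lambda>x. indicator {0<..<1::real} x * (m x - GG (\<lambda>x. indicator {0<..<1} x * g x) x))"
  define C0 where "C0 = (\<integral>x. w x * psi0 x \<partial>lborel)"
  define v where "v x = w x - indicator {0<..<1::real} x * C0" for x
  have wint: "integrable lborel w" using w_int[OF W] by (simp add: w_def)
  have wm[measurable]: "w \<in> borel_measurable borel" using wint by auto
  have wz: "w x = 0" if "x \<notin> {0<..<1}" for x using that by (simp add: w_def)
  have vint: "integrable lborel v"
    unfolding v_def by (intro Bochner_Integration.integrable_diff wint integrable_mult_left integrable_real_indicator) auto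
  have rays: "(\<integral>x. indicator {a<..} x * v x \<partial>lborel) = 0" for a
  proof (cases "a < 1")
    case False
    then have "(\<lambda>x. indicator {a<..} x * v x) = (\<lambda>x. 0)" by (auto simp: v_def wz split: split_indicator)
    then show ?thesis by (simp del: mult_eq_0_iff)
  next
    case True
    define a' where "a' = max 0 a"
    have a': "0 \<le> a'" "a' < 1" using True by (auto simp: a'_def)
    have "(\<integral>x. indicator {a<..} x * v x \<partial>lborel) = (\<integral>x. indicator {a'<..} x * w x - C0 * indicator {a'<..<1} x \<partial>lborel)"
      by (intro Bochner_Integration.integral_cong) (auto simp: v_def a'_def wz split: split_indicator)
    also have "\<dots> = (\<integral>x. indicator {a'<..} x * w x \<partial>lborel) - C0 * (\<integral>x. indicator {a'<..<1} x \<partial>lborel)"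
    proof -
      have i1: "integrable lborel (\<lambda>x. indicator {a'<..} x * w x)"
        using integrable_mult_indicator[OF _ wint, of "{a'<..}"] by simp
      have i2: "integrable lborel (\<lambda>x. C0 * indicator {a'<..<1::real} x)"
        using a' by (intro integrable_mult_right integrable_real_indicator) auto
      show ?thesis using Bochner_Integration.integral_diff[OF i1 i2] by simp
    qed
    also have "\<dots> = 0"
      using ray_identity[OF W a' w_def] a' by (simp add: C0_def)
    finally show ?thesis .
  qed
  have "AE x in lborel. v x = 0" by (rule ae_zero_from_rays[OF vint rays])
  then have "AE x in lborel. x \<in> {0<..<1} \<longrightarrow> m x = C0 + GG (\<lambda>x. indicator {0<..<1} x * g x) x"
    by eventually_elim (auto simp: v_def w_def)
  then show ?thesis by blast
qed

lemma real_amgm_bound: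
  fixes X A B :: real
  assumes A: "A \<ge> 0" and B: "B \<ge> 0" and H: "\<And>l. l > 0 \<Longrightarrow> X \<le> (l * A + B / l) / 2"
  shows "X \<le> sqrt A * sqrt B"
proof (cases "A > 0 \<and> B > 0")
  case True
  define l where "l = sqrt B / sqrt A"
  have l: "l > 0" using True by (simp add: l_def)
  have "X \<le> (l * A + B / l) / 2" by (rule H[OF l])
  also have "l * A = sqrt A * sqrt B"
    using True by (simp add: l_def field_simps)
  also have "B / l = sqrt A * sqrt B"
    using True by (simp add: l_def field_simps)
  finally show ?thesis by simp
next
  case False
  then have z: "A = 0 \<or> B = 0" using A B by auto
  show ?thesis
  proof (rule ccontr)
    assume "\<not> X \<le> sqrt A * sqrt B"
    then have X: "X > 0" using z by auto
    show False
    proof (cases "A = 0")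
      case True
      have "X \<le> (B / ((B + 1) / X)) / 2" using H[of "(B + 1) / X"] X B True by simp
      also have "\<dots> = B * X / (2 * (B + 1))" using X B by (simp add: field_simps)
      also have "\<dots> < X" using X B by (simp add: field_simps add_nonneg_pos)
      finally show False by simp
    next
      case False
      then have B0: "B = 0" using z by auto
      have "X \<le> (X / (A + 1) * A) / 2" using H[of "X / (A + 1)"] X A B0 by simp
      also have "\<dots> < X" using X A by (simp add: field_simps add_nonneg_pos)
      finally show False by simp
    qed
  qed
qed

lemma cauchy_schwarz_int:
  fixes f g :: "real \<Rightarrow> real"
  assumes fm[measurable]: "f \<in> borel_measurable borel" and gm[measurable]: "g \<in> borel_measurable borel"
    and fi: "integrable lborel (\<lambda>x. (f x)\<^sup>2)" and gi: "integrable lborel (\<lambda>x. (g x)\<^sup>2)"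
  shows "integrable lborel (\<lambda>x. \<bar>f x * g x\<bar>)"
    "(\<integral>x. \<bar>f x * g x\<bar> \<partial>lborel) \<le> sqrt (\<integral>x. (f x)\<^sup>2 \<partial>lborel) * sqrt (\<integral>x. (g x)\<^sup>2 \<partial>lborel)"
proof -
  have pt: "\<bar>f x * g x\<bar> \<le> (l * (f x)\<^sup>2 + (g x)\<^sup>2 / l) / 2" if l: "l > 0" for l x
  proof -
    have "0 \<le> (l * \<bar>f x\<bar> - \<bar>g x\<bar>)\<^sup>2 / l" using l by simp
    also have "(l * \<bar>f x\<bar> - \<bar>g x\<bar>)\<^sup>2 / l = l * (f x)\<^sup>2 + (g x)\<^sup>2 / l - 2 * \<bar>f x * g x\<bar>"
      using l by (simp add: field_simps power2_eq_square abs_mult) 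
    finally show ?thesis by simp
  qed
  have ib: "integrable lborel (\<lambda>x. (1 * (f x)\<^sup>2 + (g x)\<^sup>2 / 1) / 2)"
    using fi gi by simp
  show ii: "integrable lborel (\<lambda>x. \<bar>f x * g x\<bar>)"
    by (rule Bochner_Integration.integrable_bound[OF ib]) (use pt[of 1] in auto)
  show "(\<integral>x. \<bar>f x * g x\<bar> \<partial>lborel) \<le> sqrt (\<integral>x. (f x)\<^sup>2 \<partial>lborel) * sqrt (\<integral>x. (g x)\<^sup>2 \<partial>lborel)"
  proof (rule real_amgm_bound)
    show "0 \<le> (\<integral>x. (f x)\<^sup>2 \<partial>lborel)" "0 \<le> (\<integral>x. (g x)\<^sup>2 \<partial>lborel)" by (auto intro: integral_nonneg_AE)
    fix l :: real assume l: "l > 0"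
    have "(\<integral>x. \<bar>f x * g x\<bar> \<partial>lborel) \<le> (\<integral>x. (l * (f x)\<^sup>2 + (g x)\<^sup>2 / l) / 2 \<partial>lborel)"
      using fi gi by (intro integral_mono ii pt[OF l]) auto
    also have "\<dots> = (l * (\<integral>x. (f x)\<^sup>2 \<partial>lborel) + (\<integral>x. (g x)\<^sup>2 \<partial>lborel) / l) / 2"
      using fi gi by simp
    finally show "(\<integral>x. \<bar>f x * g x\<bar> \<partial>lborel) \<le> (l * (\<integral>x. (f x)\<^sup>2 \<partial>lborel) + (\<integral>x. (g x)\<^sup>2 \<partial>lborel) / l) / 2" .
  qed
qed

definition JJ :: "(real \<Rightarrow> real) \<Rightarrow> real \<Rightarrow> real \<Rightarrow> real" where
  "JJ f s t = (\<integral>x. indicator {s..<t} x * f x \<partial>lborel)"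

lemma JJ_add:
  assumes "integrable lborel f" "r \<le> s" "s \<le> t"
  shows "JJ f r s + JJ f s t = JJ f r t"
proof -
  have i: "integrable lborel (\<lambda>x. indicator {a..<b} x * f x)" for a b :: real
    using integrable_mult_indicator[OF _ assms(1), of "{a..<b}"] by simp
  have "JJ f r s + JJ f s t = (\<integral>x. indicator {r..<s} x * f x + indicator {s..<t} x * f x \<partial>lborel)"
    unfolding JJ_def by (rule Bochner_Integration.integral_add[OF i i, symmetric])
  also have "\<dots> = JJ f r t"
    unfolding JJ_def using assms(2,3) by (intro Bochner_Integration.integral_cong) (auto split: split_indicator)
  finally show ?thesis .
qed

lemma JJ_same[simp]: "JJ f s s = 0" by (simp add: JJ_def)

lemma GG_diff:
  assumes "integrable lborel f" "s \<le> t"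
  shows "GG f t - GG f s = JJ f s t"
proof -
  have "GG f t - GG f s = (\<integral>x. (if x < t then f x else 0) - (if x < s then f x else 0) \<partial>lborel)"
    unfolding GG_def by (rule Bochner_Integration.integral_diff[OF int_if_lt[OF assms(1)] int_if_lt[OF assms(1)], symmetric])
  also have "\<dots> = JJ f s t"
    unfolding JJ_def using assms(2) by (intro Bochner_Integration.integral_cong) (auto split: split_indicator)
  finally show ?thesis .
qed

lemma JJ_abs:
  assumes "integrable lborel f"
  shows "\<bar>JJ f s t\<bar> \<le> JJ (\<lambda>x. \<bar>f x\<bar>) s t"
proof -
  have "\<bar>JJ f s t\<bar> \<le> (\<integral>x. norm (indicator {s..<t} x * f x) \<partial>lborel)"
    unfolding JJ_def using integral_norm_bound by (metis real_norm_def)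
  also have "\<dots> = JJ (\<lambda>x. \<bar>f x\<bar>) s t"
    unfolding JJ_def by (intro Bochner_Integration.integral_cong) (auto split: split_indicator)
  finally show ?thesis .
qed

lemma JJ_mono:
  assumes "integrable lborel f" "integrable lborel g" "\<And>x. s \<le> x \<Longrightarrow> x < t \<Longrightarrow> f x \<le> g x"
  shows "JJ f s t \<le> JJ g s t"
  unfolding JJ_def
  using assms integrable_mult_indicator[OF _ assms(1), of "{s..<t}"] integrable_mult_indicator[OF _ assms(2), of "{s..<t}"]
  by (intro integral_mono) (auto split: split_indicator)

lemma JJ_nonneg:
  assumes "\<And>x. f x \<ge> 0"
  shows "JJ f s t \<ge> 0"
  unfolding JJ_def using assms by (intro integral_nonneg_AE) auto

lemma JJ_le_total:
  assumes "integrable lborel f" "\<And>x. f x \<ge> 0"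
  shows "JJ f s t \<le> (\<integral>x. f x \<partial>lborel)"
  unfolding JJ_def using assms integrable_mult_indicator[OF _ assms(1), of "{s..<t}"]
  by (intro integral_mono) (auto split: split_indicator)

lemma JJ_cmult: "JJ (\<lambda>x. c * f x) s t = c * JJ f s t"
proof -
  have "JJ (\<lambda>x. c * f x) s t = (\<integral>x. c * (indicator {s..<t} x * f x) \<partial>lborel)"
    unfolding JJ_def by (intro Bochner_Integration.integral_cong) auto
  then show ?thesis unfolding JJ_def by simp
qed

lemma exp_diff_bound: fixes x y :: real shows "\<bar>exp x - exp y\<bar> \<le> \<bar>x - y\<bar> * exp (max x y)"
proof -
  have *: "exp x - exp y \<le> (x - y) * exp x" if "y \<le> x" for x y :: real
  proof -
    have "1 + (y - x) \<le> exp (y - x)" by (rule exp_ge_add_one_self)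
    then have "exp x * (1 + (y - x)) \<le> exp x * exp (y - x)" by (intro mult_left_mono) auto
    then show ?thesis by (simp add: exp_diff algebra_simps)
  qed
  show ?thesis
  proof (cases "y \<le> x")
    case True
    then have "exp y \<le> exp x" by simp
    then show ?thesis using *[OF True] True by (simp add: max_def)
  next
    case False
    then have "exp x \<le> exp y" by simp
    then show ?thesis using *[of x y] False by (simp add: max_def abs_minus_commute)
  qed
qed

lemma modulus_bound:
  assumes g1m[measurable]: "g1 \<in> borel_measurable borel" and g1int: "integrable lborel g1"
    and g1sq: "integrable lborel (\<lambda>x. (g1 x)\<^sup>2)" and st: "s \<le> t"
  shows "\<bar>JJ g1 s t\<bar> \<le> sqrt (\<integral>x. (g1 x)\<^sup>2 \<partial>lborel) * sqrt (t - s)"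
proof -
  have "\<bar>JJ g1 s t\<bar> \<le> JJ (\<lambda>x. \<bar>g1 x\<bar>) s t" by (rule JJ_abs[OF g1int])
  also have "\<dots> = (\<integral>x. \<bar>indicator {s..<t} x * g1 x\<bar> \<partial>lborel)"
    unfolding JJ_def by (intro Bochner_Integration.integral_cong) (auto split: split_indicator)
  also have "\<dots> \<le> sqrt (\<integral>x. (indicator {s..<t} x :: real)\<^sup>2 \<partial>lborel) * sqrt (\<integral>x. (g1 x)\<^sup>2 \<partial>lborel)"
  proof (rule cauchy_schwarz_int(2))
    have "(\<lambda>x. (indicator {s..<t} x :: real)\<^sup>2) = indicator {s..<t}" by (auto split: split_indicator)
    then show "integrable lborel (\<lambda>x. (indicator {s..<t} x :: real)\<^sup>2)" using st by simp
  qed (use g1sq in auto)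
  also have "(\<integral>x. (indicator {s..<t} x :: real)\<^sup>2 \<partial>lborel) = t - s"
  proof -
    have "(\<lambda>x. (indicator {s..<t} x :: real)\<^sup>2) = indicator {s..<t}" by (auto split: split_indicator)
    then show ?thesis using st by simp
  qed
  finally show ?thesis by (simp add: mult.commute)
qed

lemma le_exp_mult_limit:
  fixes D X :: real
  assumes X: "X \<ge> 0" and H: "\<And>\<delta>. \<delta> > 0 \<Longrightarrow> D \<le> exp \<delta> * X"
  shows "D \<le> X"
proof (rule ccontr)
  assume "\<not> D \<le> X"
  then have DX: "D > X" by simp
  show False
  proof (cases "X = 0")
    case True
    then show False using H[of 1] DX by simp
  next
    case False
    then have Xp: "X > 0" using X by simp
    define \<delta> where "\<delta> = ln ((D + X) / (2 * X))"
    have r: "(D + X) / (2 * X) > 1" using Xp DX by (simp add: field_simps)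
    then have dp: "\<delta> > 0" by (simp add: \<delta>_def)
    have "exp \<delta> = (D + X) / (2 * X)" using r by (simp add: \<delta>_def)
    then have "exp \<delta> * X = (D + X) / 2" using Xp by (simp add: field_simps)
    then show False using H[OF dp] DX by simp
  qed
qed

lemma chain_bound:
  fixes g1 :: "real \<Rightarrow> real" and C s t :: real
  assumes g1m[measurable]: "g1 \<in> borel_measurable borel" and g1int: "integrable lborel g1"
    and g1sq: "integrable lborel (\<lambda>x. (g1 x)\<^sup>2)" and st: "s \<le> t"
  shows "\<bar>exp ((C + GG g1 t)/2) - exp ((C + GG g1 s)/2)\<bar> \<le> JJ (\<lambda>x. \<bar>g1 x\<bar> * exp ((C + GG g1 x)/2) / 2) s t"
proof -
  define u where "u x = C + GG g1 x" for x
  define q where "q x = exp (u x / 2)" for x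
  define h where "h x = \<bar>g1 x\<bar> * q x / 2" for x
  define Gn where "Gn = (\<integral>x. (g1 x)\<^sup>2 \<partial>lborel)"
  define NG where "NG = (\<integral>x. \<bar>g1 x\<bar> \<partial>lborel)"
  have Gn0: "Gn \<ge> 0" unfolding Gn_def by (intro integral_nonneg_AE) auto
  have um[measurable]: "u \<in> borel_measurable borel" unfolding u_def[abs_def] by measurable
  have qm[measurable]: "q \<in> borel_measurable borel" unfolding q_def[abs_def] by measurable
  have ub: "u x \<le> \<bar>C\<bar> + NG" for x
    using GG_bound[OF g1int, of x] unfolding u_def NG_def by linarith
  have qb: "\<bar>q x / 2\<bar> \<le> exp ((\<bar>C\<bar> + NG)/2)" for x
  proof -
    have "q x \<le> exp ((\<bar>C\<bar> + NG)/2)" unfolding q_def using ub[of x] by simp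
    moreover have "q x > 0" by (simp add: q_def)
    ultimately show ?thesis by simp
  qed
  have hint: "integrable lborel h"
  proof -
    have "integrable lborel (\<lambda>x. \<bar>g1 x\<bar> * (q x / 2))"
      by (rule int_bounded_mult[OF integrable_abs[OF g1int] _ qb]) measurable
    then show ?thesis by (simp add: h_def[abs_def])
  qed
  have absint: "integrable lborel (\<lambda>x. c * \<bar>g1 x\<bar>)" for c using g1int by simp
  have modu: "\<bar>u b - u a\<bar> \<le> sqrt Gn * sqrt (b - a)" if "a \<le> b" for a b
  proof -
    have "u b - u a = JJ g1 a b" unfolding u_def using GG_diff[OF g1int that] by simp
    then show ?thesis using modulus_bound[OF g1m g1int g1sq that] by (simp add: Gn_def)
  qed
  have main: "\<bar>q t - q s\<bar> \<le> exp \<delta> * JJ h s t" if dp: "\<delta> > 0" for \<delta>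
  proof -
    define \<eta> where "\<eta> = 4 * \<delta>\<^sup>2 / (Gn + 1)"
    have etap: "\<eta> > 0" using dp Gn0 by (simp add: \<eta>_def)
    have sqb: "sqrt Gn * sqrt (b - a) \<le> 2 * \<delta>" if "a \<le> b" "b - a \<le> \<eta>" for a b
    proof -
      have "sqrt Gn * sqrt (b - a) = sqrt (Gn * (b - a))" by (simp add: real_sqrt_mult)
      also have "Gn * (b - a) \<le> Gn * \<eta>" using that Gn0 by (intro mult_left_mono) auto
      hence "sqrt (Gn * (b - a)) \<le> sqrt (Gn * \<eta>)" by simp
      also have "Gn * \<eta> \<le> (2 * \<delta>)\<^sup>2"
      proof -
        have "Gn * \<eta> = 4 * \<delta>\<^sup>2 * (Gn / (Gn + 1))" by (simp add: \<eta>_def field_simps)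
        also have "Gn / (Gn + 1) \<le> 1" using Gn0 by simp
        hence "4 * \<delta>\<^sup>2 * (Gn / (Gn + 1)) \<le> 4 * \<delta>\<^sup>2 * 1" by (intro mult_left_mono) auto
        finally show ?thesis by (simp add: power2_eq_square)
      qed
      hence "sqrt (Gn * \<eta>) \<le> sqrt ((2 * \<delta>)\<^sup>2)" by (rule real_sqrt_le_mono)
      also have "\<dots> = 2 * \<delta>" using dp by (intro real_sqrt_unique) auto
      finally show ?thesis by simp
    qed
    have single: "\<bar>q b - q a\<bar> \<le> exp \<delta> * JJ h a b" if ab: "a \<le> b" "b - a \<le> \<eta>" for a b
    proof -
      define E where "E = exp (max (u b / 2) (u a / 2))"
      have "\<bar>q b - q a\<bar> \<le> \<bar>u b / 2 - u a / 2\<bar> * E"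
        unfolding q_def E_def by (rule exp_diff_bound)
      also have "\<bar>u b / 2 - u a / 2\<bar> = \<bar>JJ g1 a b\<bar> / 2"
      proof -
        have "u b / 2 - u a / 2 = JJ g1 a b / 2"
          using GG_diff[OF g1int ab(1)] unfolding u_def by (simp add: field_simps)
        then have "\<bar>u b / 2 - u a / 2\<bar> = \<bar>JJ g1 a b / 2\<bar>" by (rule arg_cong[where f=abs])
        then show ?thesis by (simp only: abs_divide abs_numeral)
      qed
      also have "\<bar>JJ g1 a b\<bar> / 2 * E \<le> JJ (\<lambda>x. \<bar>g1 x\<bar>) a b / 2 * E"
        using JJ_abs[OF g1int, of a b] by (intro mult_right_mono divide_right_mono) (auto simp: E_def)
      also have "JJ (\<lambda>x. \<bar>g1 x\<bar>) a b / 2 * E = JJ (\<lambda>x. (E / 2) * \<bar>g1 x\<bar>) a b"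
        using JJ_cmult[of "E/2" "\<lambda>x. \<bar>g1 x\<bar>" a b] by simp
      also have "\<dots> \<le> JJ (\<lambda>x. exp \<delta> * h x) a b"
      proof (rule JJ_mono[OF absint])
        show "integrable lborel (\<lambda>x. exp \<delta> * h x)" using hint by simp
        fix x assume x: "a \<le> x" "x < b"
        have "u b - u x \<le> 2 * \<delta>" using modu[of x b] sqb[of x b] x ab by auto
        moreover have "u a - u x \<le> 2 * \<delta>" using modu[of a x] sqb[of a x] x ab by auto
        ultimately have "max (u b / 2) (u a / 2) \<le> u x / 2 + \<delta>" by auto
        then have "E \<le> exp \<delta> * q x" unfolding E_def q_def by (simp add: exp_add[symmetric] add.commute)
        then have "E / 2 * \<bar>g1 x\<bar> \<le> exp \<delta> * q x / 2 * \<bar>g1 x\<bar>"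
          by (intro mult_right_mono divide_right_mono) auto
        then show "E / 2 * \<bar>g1 x\<bar> \<le> exp \<delta> * h x" by (simp add: h_def algebra_simps)
      qed
      also have "\<dots> = exp \<delta> * JJ h a b" by (rule JJ_cmult)
      finally show ?thesis .
    qed
    have ind: "\<forall>a b. a \<le> b \<longrightarrow> b - a \<le> real n * \<eta> \<longrightarrow> \<bar>q b - q a\<bar> \<le> exp \<delta> * JJ h a b" for n
    proof (induction n)
      case 0
      then show ?case by auto
    next
      case (Suc n)
      show ?case
      proof (intro allI impI)
        fix a b assume ab: "a \<le> b" "b - a \<le> real (Suc n) * \<eta>"
        show "\<bar>q b - q a\<bar> \<le> exp \<delta> * JJ h a b"
        proof (cases "b - a \<le> \<eta>")
          case True then show ?thesis using single ab by auto
        next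
          case False
          define r where "r = a + \<eta>"
          have r: "a \<le> r" "r \<le> b" "r - a \<le> \<eta>" "b - r \<le> real n * \<eta>"
            using False ab etap by (auto simp: r_def algebra_simps)
          have "\<bar>q b - q a\<bar> \<le> \<bar>q b - q r\<bar> + \<bar>q r - q a\<bar>" by simp
          also have "\<dots> \<le> exp \<delta> * JJ h r b + exp \<delta> * JJ h a r"
            using Suc.IH r single[of a r] by (intro add_mono) auto
          also have "\<dots> = exp \<delta> * JJ h a b"
            using JJ_add[OF hint r(1) r(2)] by (metis distrib_left add.commute)
          finally show ?thesis .
        qed
      qed
    qed
    obtain n where "(t - s) / \<eta> \<le> real n" using real_arch_simple by blast
    then have "t - s \<le> real n * \<eta>" using etap by (simp add: field_simps)
    then show ?thesis using ind[of n] st by blast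
  qed
  have "\<bar>q t - q s\<bar> \<le> JJ h s t"
    by (rule le_exp_mult_limit[OF JJ_nonneg main]) (auto simp: h_def q_def)
  then show ?thesis by (simp add: q_def u_def h_def[abs_def])
qed

lemma pointwise_bound:
  fixes g1 :: "real \<Rightarrow> real" and C x :: real
  assumes g1m[measurable]: "g1 \<in> borel_measurable borel" and g1int: "integrable lborel g1"
    and g1sq: "integrable lborel (\<lambda>x. (g1 x)\<^sup>2)" and g1z: "\<And>x. x \<notin> {0<..<1} \<Longrightarrow> g1 x = 0"
    and x: "x \<in> {0<..<1}"
  shows "exp (C + GG g1 x) \<le> (\<integral>y. indicator {0<..<1} y * exp (C + GG g1 y) \<partial>lborel) * (1 + sqrt (\<integral>y. (g1 y)\<^sup>2 \<partial>lborel) / 2)\<^sup>2"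
proof -
  define u where "u y = C + GG g1 y" for y
  define q where "q y = exp (u y / 2)" for y
  define h where "h y = \<bar>g1 y\<bar> * q y / 2" for y
  define M where "M = (\<integral>y. indicator {0<..<1} y * exp (u y) \<partial>lborel)"
  define Gn where "Gn = (\<integral>y. (g1 y)\<^sup>2 \<partial>lborel)"
  define NG where "NG = (\<integral>x. \<bar>g1 x\<bar> \<partial>lborel)"
  have um[measurable]: "u \<in> borel_measurable borel" unfolding u_def[abs_def] by measurable
  have qm[measurable]: "q \<in> borel_measurable borel" unfolding q_def[abs_def] by measurable
  have ub: "u y \<le> \<bar>C\<bar> + NG" for y
    using GG_bound[OF g1int, of y] unfolding u_def NG_def by linarith
  have qpos: "q y > 0" for y by (simp add: q_def)
  have q2: "(q y)\<^sup>2 = exp (u y)" for y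
    unfolding q_def by (simp add: power2_eq_square exp_add[symmetric])
  have Mint: "integrable lborel (\<lambda>y. indicator {0<..<1::real} y * exp (u y))"
  proof (rule int_bounded_mult[OF integrable_real_indicator])
    show "\<bar>exp (u y)\<bar> \<le> exp (\<bar>C\<bar> + NG)" for y using ub[of y] by simp
  qed auto
  have M0: "M \<ge> 0" unfolding M_def by (intro integral_nonneg_AE) (auto split: split_indicator)
  have Gn0: "Gn \<ge> 0" unfolding Gn_def by (intro integral_nonneg_AE) auto
  have iq2: "integrable lborel (\<lambda>y. (indicator {0<..<1::real} y * q y)\<^sup>2)"
  proof -
    have "(\<lambda>y. (indicator {0<..<1::real} y * q y)\<^sup>2) = (\<lambda>y. indicator {0<..<1::real} y * exp (u y))"
      by (auto simp: q2[symmetric] split: split_indicator)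
    then show ?thesis using Mint by simp
  qed
  have cs: "(\<integral>y. \<bar>g1 y * (indicator {0<..<1::real} y * q y)\<bar> \<partial>lborel) \<le> sqrt Gn * sqrt M"
  proof -
    have "(\<integral>y. \<bar>g1 y * (indicator {0<..<1::real} y * q y)\<bar> \<partial>lborel)
        \<le> sqrt (\<integral>y. (g1 y)\<^sup>2 \<partial>lborel) * sqrt (\<integral>y. (indicator {0<..<1::real} y * q y)\<^sup>2 \<partial>lborel)"
      by (rule cauchy_schwarz_int(2)[OF g1m _ g1sq iq2]) measurable
    also have "(\<integral>y. (indicator {0<..<1::real} y * q y)\<^sup>2 \<partial>lborel) = M"
      unfolding M_def by (intro Bochner_Integration.integral_cong) (auto simp: q2 split: split_indicator)
    finally show ?thesis by (simp add: Gn_def)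
  qed
  have hint: "(\<integral>y. h y \<partial>lborel) = (\<integral>y. \<bar>g1 y * (indicator {0<..<1::real} y * q y)\<bar> \<partial>lborel) / 2"
  proof -
    have "(\<integral>y. h y \<partial>lborel) = (\<integral>y. \<bar>g1 y * (indicator {0<..<1::real} y * q y)\<bar> / 2 \<partial>lborel)"
      using g1z qpos by (intro Bochner_Integration.integral_cong) (auto simp: h_def abs_mult abs_of_pos[OF qpos] split: split_indicator)
    then show ?thesis by simp
  qed
  have hintg: "integrable lborel h"
  proof -
    have "integrable lborel (\<lambda>y. \<bar>g1 y * (indicator {0<..<1::real} y * q y)\<bar>)"
      by (rule cauchy_schwarz_int(1)[OF g1m _ g1sq iq2]) measurable
    then have "integrable lborel (\<lambda>y. \<bar>g1 y * (indicator {0<..<1::real} y * q y)\<bar> / 2)" by simp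
    moreover have "(\<lambda>y. \<bar>g1 y * (indicator {0<..<1::real} y * q y)\<bar> / 2) = h"
      using g1z qpos by (auto simp: h_def abs_mult abs_of_pos[OF qpos] split: split_indicator)
    ultimately show ?thesis by simp
  qed
  define c where "c = sqrt Gn * sqrt M / 2"
  have c0: "c \<ge> 0" using M0 Gn0 by (simp add: c_def)
  have near: "q x - c \<le> q y" if y: "y \<in> {0<..<1}" for y
  proof -
    have "\<bar>q (max x y) - q (min x y)\<bar> \<le> JJ h (min x y) (max x y)"
      using chain_bound[OF g1m g1int g1sq, of "min x y" "max x y" C]
      by (simp add: q_def u_def h_def[abs_def])
    also have "\<dots> \<le> (\<integral>y. h y \<partial>lborel)"
      by (rule JJ_le_total[OF hintg]) (auto simp: h_def q_def)
    also have "\<dots> \<le> c" using hint cs by (simp add: c_def)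
    finally have "\<bar>q (max x y) - q (min x y)\<bar> \<le> c" .
    then show ?thesis by (cases "x \<le> y") (auto simp: max_def min_def)
  qed
  have qx: "q x \<le> sqrt M + c"
  proof (cases "q x \<le> c")
    case True
    moreover have "sqrt M \<ge> 0" using M0 by simp
    ultimately show ?thesis by linarith
  next
    case False
    then have d0: "q x - c \<ge> 0" by simp
    have "(q x - c)\<^sup>2 = (\<integral>y. indicator {0<..<1::real} y * (q x - c)\<^sup>2 \<partial>lborel)" by simp
    also have "\<dots> \<le> M"
      unfolding M_def
    proof (rule integral_mono[OF _ Mint])
      show "integrable lborel (\<lambda>y. indicator {0<..<1::real} y * (q x - c)\<^sup>2)" by simp
      fix y
      show "indicator {0<..<1::real} y * (q x - c)\<^sup>2 \<le> indicator {0<..<1::real} y * exp (u y)"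
      proof (cases "y \<in> {0<..<1}")
        case True
        then have "(q x - c)\<^sup>2 \<le> (q y)\<^sup>2" using near[OF True] d0 by (intro power_mono) auto
        then show ?thesis using True q2 by simp
      qed simp
    qed
    finally have "sqrt ((q x - c)\<^sup>2) \<le> sqrt M" by (rule real_sqrt_le_mono)
    then show ?thesis using d0 by simp
  qed
  have "exp (u x) = (q x)\<^sup>2" by (simp add: q2)
  also have "\<dots> \<le> (sqrt M + c)\<^sup>2" using qx qpos[of x] by (intro power_mono) auto
  also have "sqrt M + c = sqrt M * (1 + sqrt Gn / 2)" by (simp add: c_def algebra_simps)
  also have "(sqrt M * (1 + sqrt Gn / 2))\<^sup>2 = M * (1 + sqrt Gn / 2)\<^sup>2"
    using M0 by (simp add: power_mult_distrib)
  finally show ?thesis by (simp add: u_def M_def Gn_def)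
qed

lemma final_algebra:
  fixes M G \<nu> :: real
  assumes "\<nu> > 0" "G \<ge> 0"
  shows "M\<^sup>2 * (1 + sqrt G / 2)\<^sup>2 \<le> (1 + \<nu>) / 4 * M\<^sup>2 * G + (1 + 1 / \<nu>) * M\<^sup>2"
proof -
  have sG: "(sqrt G)\<^sup>2 = G" using assms by simp
  have "0 \<le> (\<nu> * sqrt G / 2 - 1)\<^sup>2" by simp
  also have "(\<nu> * sqrt G / 2 - 1)\<^sup>2 = \<nu> * (\<nu> * G / 4 + 1 / \<nu> - sqrt G)"
    using assms sG by (simp add: power2_eq_square field_simps)
  finally have "0 \<le> \<nu> * G / 4 + 1 / \<nu> - sqrt G"
    using assms by (simp add: zero_le_mult_iff)
  then have k: "(1 + sqrt G / 2)\<^sup>2 \<le> (1 + \<nu>) / 4 * G + (1 + 1 / \<nu>)"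
    using sG by (simp add: power2_eq_square field_simps)
  have "M\<^sup>2 * (1 + sqrt G / 2)\<^sup>2 \<le> M\<^sup>2 * ((1 + \<nu>) / 4 * G + (1 + 1 / \<nu>))"
    by (rule mult_left_mono[OF k]) simp
  then show ?thesis by (simp add: algebra_simps)
qed

theorem proposition5:
  fixes m g :: "real \<Rightarrow> real" and \<nu> :: real
  assumes "W12_01 m g" and "\<nu> > 0"
  shows "(LINT x:{0<..<1}|lborel. exp (2 * m x))
     \<le> (1 + \<nu>) / 4 * (LINT x:{0<..<1}|lborel. exp (m x))\<^sup>2 * (LINT x:{0<..<1}|lborel. \<bar>g x\<bar>\<^sup>2)
       + (1 + 1 / \<nu>) * (LINT x:{0<..<1}|lborel. exp (m x))\<^sup>2"
proof -
  note W = assms(1)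
  define g1 where "g1 = (\<lambda>x. indicator {0<..<1::real} x * g x)"
  obtain C where AEm: "AE x in lborel. x \<in> {0<..<1} \<longrightarrow> m x = C + GG g1 x"
    using W12_rep[OF W] unfolding g1_def by blast
  have Lm: "L2_01 m" and Lg: "L2_01 g" using W by (auto simp: W12_01_def)
  have g1int: "integrable lborel g1" using L2_int[OF Lg] by (simp add: g1_def)
  have g1m[measurable]: "g1 \<in> borel_measurable borel" using g1int by auto
  have g1sq: "integrable lborel (\<lambda>x. (g1 x)\<^sup>2)"
  proof -
    have "(\<lambda>x. (g1 x)\<^sup>2) = (\<lambda>x. indicator {0<..<1::real} x * (g x)\<^sup>2)"
      by (auto simp: g1_def split: split_indicator)
    then show ?thesis using L2_sq_int[OF Lg] by simp
  qed
  have g1z: "\<And>x. x \<notin> {0<..<1} \<Longrightarrow> g1 x = 0" by (simp add: g1_def)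
  have m1m[measurable]: "(\<lambda>x. indicator {0<..<1::real} x * m x) \<in> borel_measurable borel"
    using L2_meas[OF Lm] by simp
  define u where "u x = C + GG g1 x" for x
  have um[measurable]: "u \<in> borel_measurable borel" unfolding u_def[abs_def] by measurable
  define NG where "NG = (\<integral>x. \<bar>g1 x\<bar> \<partial>lborel)"
  have ub: "u y \<le> \<bar>C\<bar> + NG" for y
    using GG_bound[OF g1int, of y] unfolding u_def NG_def by linarith
  define M where "M = (\<integral>y. indicator {0<..<1} y * exp (u y) \<partial>lborel)"
  define Gn where "Gn = (\<integral>y. (g1 y)\<^sup>2 \<partial>lborel)"
  define K where "K = (1 + sqrt Gn / 2)\<^sup>2"
  have Gn0: "Gn \<ge> 0" unfolding Gn_def by (intro integral_nonneg_AE) auto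
  have pw: "exp (u y) \<le> M * K" if "y \<in> {0<..<1}" for y
    using pointwise_bound[OF g1m g1int g1sq g1z that, of C] by (simp add: u_def M_def Gn_def K_def)
  have Mint: "integrable lborel (\<lambda>y. indicator {0<..<1::real} y * exp (u y))"
  proof (rule int_bounded_mult[OF integrable_real_indicator])
    show "\<bar>exp (u y)\<bar> \<le> exp (\<bar>C\<bar> + NG)" for y using ub[of y] by simp
  qed auto
  have M2int: "integrable lborel (\<lambda>y. indicator {0<..<1::real} y * exp (2 * u y))"
  proof (rule int_bounded_mult[OF integrable_real_indicator])
    show "\<bar>exp (2 * u y)\<bar> \<le> exp (2 * (\<bar>C\<bar> + NG))" for y using ub[of y] by simp
  qed auto
  have E1: "(LINT x:{0<..<1}|lborel. exp (2 * m x)) = (\<integral>y. indicator {0<..<1} y * exp (2 * u y) \<partial>lborel)"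
  proof -
    have "(LINT x:{0<..<1}|lborel. exp (2 * m x)) = (\<integral>y. indicator {0<..<1} y * exp (2 * (indicator {0<..<1::real} y * m y)) \<partial>lborel)"
      unfolding set_lebesgue_integral_def
      by (intro Bochner_Integration.integral_cong) (auto split: split_indicator)
    also have "\<dots> = (\<integral>y. indicator {0<..<1} y * exp (2 * u y) \<partial>lborel)"
    proof (rule integral_cong_AE)
      show "AE x in lborel. indicator {0<..<1} x * exp (2 * (indicator {0<..<1::real} x * m x)) = indicator {0<..<1} x * exp (2 * u x)"
        using AEm by eventually_elim (auto simp: u_def split: split_indicator)
    qed measurable
    finally show ?thesis .
  qed
  have E2: "(LINT x:{0<..<1}|lborel. exp (m x)) = M"
  proof -
    have "(LINT x:{0<..<1}|lborel. exp (m x)) = (\<integral>y. indicator {0<..<1} y * exp (indicator {0<..<1::real} y * m y) \<partial>lborel)"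
      unfolding set_lebesgue_integral_def
      by (intro Bochner_Integration.integral_cong) (auto split: split_indicator)
    also have "\<dots> = M"
      unfolding M_def
    proof (rule integral_cong_AE)
      show "AE x in lborel. indicator {0<..<1} x * exp (indicator {0<..<1::real} x * m x) = indicator {0<..<1} x * exp (u x)"
        using AEm by eventually_elim (auto simp: u_def split: split_indicator)
    qed measurable
    finally show ?thesis .
  qed
  have E3: "(LINT x:{0<..<1}|lborel. \<bar>g x\<bar>\<^sup>2) = Gn"
    unfolding set_lebesgue_integral_def Gn_def
    by (intro Bochner_Integration.integral_cong) (auto simp: g1_def split: split_indicator)
  have M0: "M \<ge> 0" unfolding M_def by (intro integral_nonneg_AE) (auto split: split_indicator)
  have "(\<integral>y. indicator {0<..<1} y * exp (2 * u y) \<partial>lborel) \<le> (\<integral>y. (M * K) * (indicator {0<..<1} y * exp (u y)) \<partial>lborel)"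
  proof (rule integral_mono[OF M2int])
    show "integrable lborel (\<lambda>y. (M * K) * (indicator {0<..<1::real} y * exp (u y)))"
      using Mint by simp
    fix y
    show "indicator {0<..<1} y * exp (2 * u y) \<le> (M * K) * (indicator {0<..<1::real} y * exp (u y))"
    proof (cases "y \<in> {0<..<1}")
      case True
      have "exp (2 * u y) = exp (u y) * exp (u y)" by (simp add: exp_add[symmetric])
      also have "\<dots> \<le> exp (u y) * (M * K)" using pw[OF True] by (intro mult_left_mono) auto
      finally show ?thesis using True by (simp add: mult.commute)
    qed simp
  qed
  also have "\<dots> = M * K * M" by (simp add: M_def)
  also have "\<dots> = M\<^sup>2 * (1 + sqrt Gn / 2)\<^sup>2" by (simp add: K_def power2_eq_square)
  also have "\<dots> \<le> (1 + \<nu>) / 4 * M\<^sup>2 * Gn + (1 + 1 / \<nu>) * M\<^sup>2"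
    by (rule final_algebra[OF assms(2) Gn0])
  finally show ?thesis using E1 E2 E3 by simp
qed

end
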